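(* Let $\mathcal S$ be a fundamental system and $G\subset\mathrm{Homeo}_+([0,1])$ the group generated by the elements of $\mathcal S$. Then $G$ is without linked fixed points and totally rational.
   Context: A homeomorphism $f$ of $[0,1]$ is simple if $[0,1]\setminus\mathrm{Fix}(f)$ has exactly one connected component; its closure is the support $S_f$ of $f$. It is positive if $f(x)\ge x$ for all $x$. A fundamental domain of a simple $f$ is a segment $[x,f(x)]$ with $x$ in the interior of $S_f$. A fundamental system is a family $\mathcal S$ of triples $(f,S_f,I_f)$ such that each $f$ is a simple positive homeomorphism of $[0,1]$, $S_f$ is its support and $I_f\subset S_f$ is a fundamental domain of $f$, and for any two distinct triples in $\mathcal S$: either $S_f$ and $S_g$ have disjoint interiors, or $S_f\subset I_g$, or $S_g\subset I_f$. For a group $G$ of homeomorphisms of $[0,1]$, a pair of successive fixed points is a pair $\{a,b\}$, $a<b$, such that $(a,b)$ is a connected component of $[0,1]\setminus \mathrm{Fix}(g)$ for some $g\in G$; two pairs $\{a,b\},\{c,d\}$ are linked if $(a,b)\cap\{c,d\}$ or $(c,d)\cap\{a,b\}$ consists of exactly one point; $G$ is without linked fixed points if no two such pairs are linked. For such $G$ and a pair $\{a,b\}$, $G_{[a,b]}$ is the stabilizer of $[a,b]$, and the relative translation number $\tau_{a,b}:G_{[a,b]}\to\mathbb R$ is a group morphism whose kernel is the set of elements having a fixed point in $(a,b)$ and which is positive exactly at elements $g$ with $g(x)>x$ on $(a,b)$ (it exists and is unique up to a positive factor). $G$ is totally rational if for every pair $\{a,b\}$ of successive fixed points, $\tau_{a,b}(G_{[a,b]})$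 is a cyclic subgroup $\alpha\mathbb Z$ of $\mathbb R$. *)

theory Defs
  imports "HOL-Analysis.Analysis"
begin

text \<open>Orientation-preserving homeomorphisms of [0,1], represented as functions on the reals
  that are the identity outside [0,1] (so composition and inverse are the group operations).\<close>
definition homeo_plus :: "(real \<Rightarrow> real) set" where
  "homeo_plus = {f. (\<exists>g. homeomorphism {0..1} {0..1} f g) \<and> strict_mono_on {0..1} f
                    \<and> (\<forall>x. x \<notin> {0..1} \<longrightarrow> f x = x)}"

definition Fix :: "(real \<Rightarrow> real) \<Rightarrow> real set" where
  "Fix f = {x \<in> {0..1}. f x = x}"

definition simple_homeo :: "(real \<Rightarrow> real) \<Rightarrow> bool" where
  "simple_homeo f \<longleftrightarrow> (\<exists>C. components ({0..1} - Fix f) = {C})"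

definition supp :: "(real \<Rightarrow> real) \<Rightarrow> real set" where
  "supp f = closure ({0..1} - Fix f)"

definition positive_homeo :: "(real \<Rightarrow> real) \<Rightarrow> bool" where
  "positive_homeo f \<longleftrightarrow> (\<forall>x\<in>{0..1}. x \<le> f x)"

definition fundamental_domain :: "(real \<Rightarrow> real) \<Rightarrow> real set \<Rightarrow> bool" where
  "fundamental_domain f I \<longleftrightarrow> (\<exists>x \<in> interior (supp f). I = {x..f x})"

definition fundamental_system ::
  "((real \<Rightarrow> real) \<times> real set \<times> real set) set \<Rightarrow> bool" where
  "fundamental_system \<S> \<longleftrightarrow>
     (\<forall>(f, S, I) \<in> \<S>. f \<in> homeo_plus \<and> simple_homeo f \<and> positive_homeo f
                        \<and> S = supp f \<and> I \<subseteq> S \<and> fundamental_domain f I) \<and>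
     (\<forall>(f, S, I) \<in> \<S>. \<forall>(g, S', I') \<in> \<S>. (f, S, I) \<noteq> (g, S', I') \<longrightarrow>
         interior S \<inter> interior S' = {} \<or> S \<subseteq> I' \<or> S' \<subseteq> I)"

inductive_set gen_group :: "(real \<Rightarrow> real) set \<Rightarrow> (real \<Rightarrow> real) set"
  for A :: "(real \<Rightarrow> real) set" where
  gen_id: "id \<in> gen_group A"
| gen_base: "f \<in> A \<Longrightarrow> f \<in> gen_group A"
| gen_inv: "f \<in> gen_group A \<Longrightarrow> inv f \<in> gen_group A"
| gen_comp: "f \<in> gen_group A \<Longrightarrow> g \<in> gen_group A \<Longrightarrow> f \<circ> g \<in> gen_group A"

definition succ_fixed_pair :: "(real \<Rightarrow> real) set \<Rightarrow> real \<Rightarrow> real \<Rightarrow> bool" where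
  "succ_fixed_pair G a b \<longleftrightarrow> a < b \<and> (\<exists>g\<in>G. {a<..<b} \<in> components ({0..1} - Fix g))"

definition linked :: "real \<Rightarrow> real \<Rightarrow> real \<Rightarrow> real \<Rightarrow> bool" where
  "linked a b c d \<longleftrightarrow> card ({a<..<b} \<inter> {c, d}) = 1 \<or> card ({c<..<d} \<inter> {a, b}) = 1"

definition without_linked_fixed_points :: "(real \<Rightarrow> real) set \<Rightarrow> bool" where
  "without_linked_fixed_points G \<longleftrightarrow>
     (\<forall>a b c d. succ_fixed_pair G a b \<and> succ_fixed_pair G c d \<longrightarrow> \<not> linked a b c d)"

definition stab :: "(real \<Rightarrow> real) set \<Rightarrow> real \<Rightarrow> real \<Rightarrow> (real \<Rightarrow> real) set" where
  "stab G a b = {g \<in> G. g ` {a..b} = {a..b}}"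

definition rel_translation_number ::
  "(real \<Rightarrow> real) set \<Rightarrow> real \<Rightarrow> real \<Rightarrow> ((real \<Rightarrow> real) \<Rightarrow> real) \<Rightarrow> bool" where
  "rel_translation_number G a b \<tau> \<longleftrightarrow>
     (\<forall>g\<in>stab G a b. \<forall>h\<in>stab G a b. \<tau> (g \<circ> h) = \<tau> g + \<tau> h) \<and>
     (\<forall>g\<in>stab G a b. \<tau> g = 0 \<longleftrightarrow> (\<exists>x\<in>{a<..<b}. g x = x)) \<and>
     (\<forall>g\<in>stab G a b. \<tau> g > 0 \<longleftrightarrow> (\<forall>x\<in>{a<..<b}. g x > x))"

definition totally_rational :: "(real \<Rightarrow> real) set \<Rightarrow> bool" where
  "totally_rational G \<longleftrightarrow>
     (\<forall>a b. succ_fixed_pair G a b \<longrightarrow>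
        (\<exists>\<tau>. rel_translation_number G a b \<tau> \<and>
              (\<exists>\<alpha>::real. \<tau> ` stab G a b = {\<alpha> * of_int k | k. True})))"

end

theory Submission imports Defs begin

definition GOOD :: "real set \<Rightarrow> (real \<Rightarrow> real) \<Rightarrow> bool" where
  "GOOD U g \<longleftrightarrow> bij g \<and> strict_mono g \<and> (\<forall>y. y \<notin> U \<longrightarrow> g y = y)"

lemma strict_mono_inv_real:
  assumes "bij g" "strict_mono (g::real\<Rightarrow>real)" shows "strict_mono (inv g)"
proof (rule strict_monoI)
  fix x y :: real assume "x < y"
  show "inv g x < inv g y"
  proof (rule ccontr)
    assume "\<not> ?thesis" hence "inv g y \<le> inv g x" by simp
    hence "g (inv g y) \<le> g (inv g x)" using assms(2) by (simp add: strict_mono_less_eq)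
    thus False using \<open>x<y\<close> assms(1) by (simp add: bij_is_surj surj_f_inv_f)
  qed
qed

lemma GOOD_id: "GOOD U id" by (simp add: GOOD_def strict_mono_def)

lemma GOOD_inv: assumes "GOOD U g" shows "GOOD U (inv g)"
  using assms unfolding GOOD_def
  by (auto simp: bij_imp_bij_inv strict_mono_inv_real bij_is_inj inv_f_eq)

lemma GOOD_comp: assumes "GOOD U g" "GOOD U h" shows "GOOD U (g \<circ> h)"
  using assms unfolding GOOD_def
  by (auto simp: bij_comp strict_mono_def)

lemma GOOD_mono: "GOOD U g \<Longrightarrow> U \<subseteq> V \<Longrightarrow> GOOD V g"
  unfolding GOOD_def by blast

lemma GOOD_maps: assumes "GOOD U g" "y \<in> U" shows "g y \<in> U"
proof (rule ccontr)
  assume "g y \<notin> U"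
  hence "g (g y) = g y" using assms unfolding GOOD_def by blast
  hence "g y = y" using assms unfolding GOOD_def by (meson bij_is_inj injD)
  thus False using \<open>g y \<notin> U\<close> assms(2) by simp
qed

lemma GOOD_commute:
  assumes "GOOD U g" "GOOD V h" "U \<inter> V = {}" shows "g \<circ> h = h \<circ> g"
proof
  fix y
  have gU: "\<And>z. z \<notin> U \<Longrightarrow> g z = z" and hV: "\<And>z. z \<notin> V \<Longrightarrow> h z = z"
    using assms unfolding GOOD_def by blast+
  show "(g \<circ> h) y = (h \<circ> g) y"
  proof (cases "y \<in> U")
    case True
    have "h y = y" using True assms(3) hV by blast
    moreover have "h (g y) = g y" using GOOD_maps[OF assms(1) True] assms(3) hV by blast
    ultimately show ?thesis by simp
  next
    case False
    show ?thesis
    proof (cases "y \<in> V")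
      case True
      have "g y = y" using True assms(3) gU by blast
      moreover have "g (h y) = h y" using GOOD_maps[OF assms(2) True] assms(3) gU by blast
      ultimately show ?thesis by simp
    next
      case False
      then show ?thesis using \<open>y \<notin> U\<close> gU hV by auto
    qed
  qed
qed

lemma GOOD_inj: "GOOD U g \<Longrightarrow> g a = g b \<longleftrightarrow> a = b"
  unfolding GOOD_def by (meson bij_is_inj injD)

lemma GOOD_less: "GOOD U g \<Longrightarrow> g a < g b \<longleftrightarrow> a < b"
  unfolding GOOD_def by (simp add: strict_mono_less)

lemma GOOD_le: "GOOD U g \<Longrightarrow> g a \<le> g b \<longleftrightarrow> a \<le> b"
  unfolding GOOD_def by (simp add: strict_mono_less_eq)

lemma GOOD_inv_app: "GOOD U g \<Longrightarrow> g (inv g y) = y"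
  unfolding GOOD_def by (simp add: bij_is_surj surj_f_inv_f)

lemma GOOD_inv_app2: "GOOD U g \<Longrightarrow> inv g (g y) = y"
  unfolding GOOD_def by (simp add: bij_is_inj)

section \<open>Integer powers\<close>

definition ipow :: "(real \<Rightarrow> real) \<Rightarrow> int \<Rightarrow> real \<Rightarrow> real" where
  "ipow f k = (if 0 \<le> k then f ^^ nat k else inv f ^^ nat (-k))"

lemma ipow_0[simp]: "ipow f 0 = id" by (simp add: ipow_def)

lemma ipow_Suc:
  assumes "bij f" shows "ipow f (k+1) = f \<circ> ipow f k"
proof (cases "0 \<le> k")
  case True
  hence "nat (k+1) = Suc (nat k)" by simp
  then show ?thesis using True by (simp add: ipow_def)
next
  case False
  hence k1: "nat (-k) = Suc (nat (-(k+1)))" by simp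
  have "f \<circ> inv f = id" using assms by (intro ext) (simp add: bij_is_surj surj_f_inv_f)
  hence "f \<circ> (inv f ^^ nat (-k)) = inv f ^^ nat (-(k+1))"
    unfolding k1 funpow.simps by (simp add: o_assoc)
  then show ?thesis using False by (simp add: ipow_def)
qed

lemma ipow_Suc_app: "bij f \<Longrightarrow> ipow f (k+1) y = f (ipow f k y)"
  by (simp add: ipow_Suc)

lemma ipow_pred:
  assumes "bij f" shows "ipow f (k-1) = inv f \<circ> ipow f k"
proof -
  have "ipow f k = f \<circ> ipow f (k-1)" using ipow_Suc[OF assms, of "k-1"] by simp
  thus ?thesis using assms by (simp add: fun_eq_iff bij_is_inj)
qed

lemma ipow_add:
  assumes "bij f" shows "ipow f (a+b) = ipow f a \<circ> ipow f b"
proof (induction a rule: int_induct[where k=0])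
  case base then show ?case by simp
next
  case (step1 i)
  have "ipow f (i+1+b) = ipow f (i+b+1)" by (simp add: ac_simps)
  also have "\<dots> = f \<circ> ipow f (i+b)" by (rule ipow_Suc[OF assms])
  also have "\<dots> = ipow f (i+1) \<circ> ipow f b" using step1 by (simp add: fun_eq_iff ipow_Suc[OF assms])
  finally show ?case .
next
  case (step2 i)
  have "ipow f (i-1+b) = ipow f (i+b-1)" by (simp add: algebra_simps)
  also have "\<dots> = inv f \<circ> ipow f (i+b)" by (rule ipow_pred[OF assms])
  also have "\<dots> = ipow f (i-1) \<circ> ipow f b" using step2 by (simp add: fun_eq_iff ipow_pred[OF assms])
  finally show ?case .
qed

lemma ipow_1[simp]: "ipow f 1 = f" by (simp add: ipow_def)

lemma ipow_add_app: "bij f \<Longrightarrow> ipow f (a+b) y = ipow f a (ipow f b y)"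
  by (simp add: ipow_add)

lemma GOOD_funpow: "GOOD U f \<Longrightarrow> GOOD U (f ^^ n)"
  by (induction n) (auto simp: GOOD_id GOOD_comp)

lemma GOOD_ipow: "GOOD U f \<Longrightarrow> GOOD U (ipow f k)"
  by (simp add: ipow_def GOOD_funpow GOOD_inv)

lemma gen_group_funpow: "f \<in> gen_group A \<Longrightarrow> f ^^ n \<in> gen_group A"
  by (induction n) (auto intro: gen_group.intros)

lemma gen_group_ipow: "f \<in> gen_group A \<Longrightarrow> ipow f k \<in> gen_group A"
  by (simp add: ipow_def gen_group_funpow gen_group.gen_inv)

lemma gen_group_mono: "f \<in> gen_group A \<Longrightarrow> A \<subseteq> B \<Longrightarrow> f \<in> gen_group B"
  by (induction rule: gen_group.induct) (auto intro: gen_group.intros)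

section \<open>Shape of generators\<close>

definition shp :: "(real \<Rightarrow> real) \<Rightarrow> real \<Rightarrow> real \<Rightarrow> real \<Rightarrow> bool" where
  "shp e p q x \<longleftrightarrow> GOOD {p<..<q} e \<and> continuous_on {0..1} e \<and> 0 \<le> p \<and> p < x \<and> x < e x
      \<and> e x < q \<and> q \<le> 1 \<and> (\<forall>y. p < y \<and> y < q \<longrightarrow> y < e y)"

lemma homeo_plus_facts:
  assumes "e \<in> homeo_plus"
  shows "bij e" "strict_mono e" "continuous_on {0..1} e" "e 0 = 0" "e 1 = 1"
    "\<And>y. y \<notin> {0..1} \<Longrightarrow> e y = y" "\<And>y. y \<in> {0..1} \<Longrightarrow> e y \<in> {0..1}"
proof -
  obtain g where hom: "homeomorphism {0..1} {0..1} e g" and smo: "strict_mono_on {0..1} e"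
    and out: "\<And>x. x \<notin> {0..1} \<Longrightarrow> e x = x"
    using assms unfolding homeo_plus_def by blast
  have img: "e ` {0..1} = {0..1}" and cont: "continuous_on {0..1} e"
    using hom unfolding homeomorphism_def by auto
  show "continuous_on {0..1} e" by (rule cont)
  show "\<And>y. y \<notin> {0..1} \<Longrightarrow> e y = y" by (rule out)
  show inI: "\<And>y. y \<in> {0..1} \<Longrightarrow> e y \<in> {0..1}" using img by blast
  show sm: "strict_mono e"
  proof (rule strict_monoI)
    fix x y :: real assume xy: "x < y"
    show "e x < e y"
    proof (cases "x \<in> {0..1}")
      case True
      show ?thesis
      proof (cases "y \<in> {0..1}")
        case True
        then show ?thesis using \<open>x \<in> {0..1}\<close> smo xy by (simp add: strict_mono_on_def)
      next
        case False
        then have "y > 1" using xy True by auto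
        then show ?thesis using inI[OF True] out[OF False] by auto
      qed
    next
      case False
      hence ex: "e x = x" by (rule out)
      show ?thesis
      proof (cases "y \<in> {0..1}")
        case True
        hence "x < 0" using xy False by auto
        then show ?thesis using inI[OF True] ex by auto
      next
        case False
        then show ?thesis using ex out xy by auto
      qed
    qed
  qed
  show "bij e"
  proof (rule bijI)
    show "inj e" using sm by (rule strict_mono_imp_inj_on)
    show "surj e"
    proof -
      have "y \<in> range e" for y
      proof (cases "y \<in> {0..1}")
        case True then show ?thesis using img by blast
      next
        case False then show ?thesis using out[OF False] by (metis rangeI)
      qed
      thus ?thesis by blast
    qed
  qed
  show "e 0 = 0"
  proof -
    obtain z where z: "z \<in> {0..1}" "e z = 0" using img by (metis atLeastAtMost_iff image_iff order_refl zero_le_one)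
    have "e 0 \<le> e z" using z(1) strict_mono_less_eq[OF sm, of 0 z] by simp
    moreover have "e 0 \<ge> 0" using inI[of 0] by simp
    ultimately show ?thesis using z by simp
  qed
  show "e 1 = 1"
  proof -
    obtain z where z: "z \<in> {0..1}" "e z = 1" using img by (metis atLeastAtMost_iff image_iff order_refl zero_le_one)
    have "e z \<le> e 1" using z(1) strict_mono_less_eq[OF sm, of z 1] by simp
    moreover have "e 1 \<le> 1" using inI[of 1] by simp
    ultimately show ?thesis using z by simp
  qed
qed

lemma triple_shape:
  assumes FS: "fundamental_system \<S>" and t: "(e,S,I) \<in> \<S>"
  shows "shp e (Inf S) (Sup S) (Inf I) \<and> S = {Inf S..Sup S} \<and> I = {Inf I..e (Inf I)}"
proof -
  have hp: "e \<in> homeo_plus" and sim: "simple_homeo e" and pos: "positive_homeo e"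
    and Sd: "S = supp e" and fd: "fundamental_domain e I"
    using bspec[OF conjunct1[OF FS[unfolded fundamental_system_def]] t] by simp_all
  note H = homeo_plus_facts[OF hp]
  define C where "C = {0..1} - Fix e"
  have Ceq: "C = {y \<in> {0..1}. y < e y}"
  proof -
    have le: "\<And>y. y \<in> {0..1} \<Longrightarrow> y \<le> e y" using pos unfolding positive_homeo_def by blast
    show ?thesis
    proof (rule set_eqI)
      fix y
      have "y \<in> C \<longleftrightarrow> y \<in> {0..1} \<and> e y \<noteq> y" unfolding C_def Fix_def by blast
      also have "\<dots> \<longleftrightarrow> y \<in> {0..1} \<and> y < e y" using le[of y] by linarith
      finally show "y \<in> C \<longleftrightarrow> y \<in> {y \<in> {0..1}. y < e y}" by blast
    qed
  qed
  obtain C0 where cc: "components C = {C0}" using sim unfolding simple_homeo_def C_def by blast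
  have "C = C0" using Union_components[of C] cc by simp
  have C0c: "C0 \<in> components C" using cc by simp
  have conn: "connected C" using in_components_connected[OF C0c] \<open>C = C0\<close> by simp
  have ne: "C \<noteq> {}" using in_components_nonempty[OF C0c] \<open>C = C0\<close> by simp
  have C01: "C = {0<..<1} \<inter> {y. y < e y}"
  proof -
    have a: "0 < y" if "0 \<le> y" "y < e y" for y using that H(4) by (cases "y = 0") auto
    have b: "y < 1" if "y \<le> 1" "y < e y" for y using that H(5) by (cases "y = 1") auto
    show ?thesis unfolding Ceq using a b by auto
  qed
  have opn: "open C"
  proof -
    have "continuous_on {0<..<1} (\<lambda>y. e y - y)"
      by (intro continuous_intros continuous_on_subset[OF H(3)]) auto
    hence "open ((\<lambda>y. e y - y) -` {0<..} \<inter> {0<..<1})"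
      using continuous_on_open_vimage[of "{0<..<1}" "\<lambda>y. e y - y"] open_greaterThan by auto
    moreover have "(\<lambda>y. e y - y) -` {0<..} \<inter> {0<..<1} = C" unfolding C01 by auto
    ultimately show ?thesis by simp
  qed
  have bb: "bdd_below C" "bdd_above C" unfolding bdd_below_def bdd_above_def Ceq by auto
  define p where "p = Inf C"
  define q where "q = Sup C"
  have Cpq: "C = {p<..<q}"
  proof
    show "C \<subseteq> {p<..<q}"
    proof
      fix y assume y: "y \<in> C"
      obtain \<epsilon> where \<epsilon>: "\<epsilon> > 0" "\<And>z. \<bar>z - y\<bar> < \<epsilon> \<Longrightarrow> z \<in> C"
        using opn y unfolding open_real by blast
      have "y - \<epsilon>/2 \<in> C" "y + \<epsilon>/2 \<in> C" using \<epsilon> by auto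
      hence "p \<le> y - \<epsilon>/2" "y + \<epsilon>/2 \<le> q" unfolding p_def q_def using bb
        by (auto intro: cInf_lower cSup_upper)
      thus "y \<in> {p<..<q}" using \<epsilon> by auto
    qed
  next
    show "{p<..<q} \<subseteq> C"
    proof
      fix y assume y: "y \<in> {p<..<q}"
      obtain a where a: "a \<in> C" "a < y" using y cInf_less_iff[OF ne bb(1)] unfolding p_def by auto
      obtain b where b: "b \<in> C" "y < b" using y less_cSup_iff[OF ne bb(2)] unfolding q_def by auto
      show "y \<in> C" using conn a b y unfolding connected_iff_interval by (meson less_imp_le)
    qed
  qed
  have pq: "p < q" using ne Cpq by auto
  have pqC: "0 < y \<and> y < 1 \<and> y < e y" if "p < y" "y < q" for y
  proof -
    have "y \<in> C" using that Cpq by simp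
    thus ?thesis by (simp add: C01)
  qed
  have p0: "0 \<le> p"
  proof -
    obtain y where "y \<in> C" using ne by blast
    hence "p < y" "y < q" using Cpq by auto
    hence h: "\<forall>z. p < z \<and> z < y \<longrightarrow> 0 < z" using pqC by force
    show ?thesis
    proof (rule ccontr)
      assume "\<not> 0 \<le> p"
      hence "p < (p + min y 0)/2" "(p + min y 0)/2 < y" "(p + min y 0)/2 \<le> 0" using \<open>p < y\<close> by auto
      thus False using h[rule_format, of "(p + min y 0)/2"] by linarith
    qed
  qed
  have q1: "q \<le> 1"
  proof -
    obtain y where "y \<in> C" using ne by blast
    hence "p < y" "y < q" using Cpq by auto
    hence h: "\<forall>z. y < z \<and> z < q \<longrightarrow> z < 1" using pqC by force
    show ?thesis
    proof (rule ccontr)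
      assume "\<not> q \<le> 1"
      hence "y < (q + max y 1)/2" "(q + max y 1)/2 < q" "1 \<le> (q + max y 1)/2" using \<open>y < q\<close> by auto
      thus False using h[rule_format, of "(q + max y 1)/2"] by linarith
    qed
  qed
  have inside: "\<And>y. p < y \<Longrightarrow> y < q \<Longrightarrow> y < e y" using pqC by blast
  have outside: "\<And>y. y \<notin> {p<..<q} \<Longrightarrow> e y = y"
  proof -
    fix y assume y: "y \<notin> {p<..<q}"
    show "e y = y"
    proof (cases "y \<in> {0..1}")
      case True
      hence "y \<notin> C" using y Cpq by simp
      hence "\<not> y < e y" using True unfolding Ceq by blast
      moreover have "y \<le> e y" using True pos unfolding positive_homeo_def by blast
      ultimately show ?thesis by linarith
    next
      case False then show ?thesis using H(6) by blast
    qed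
  qed
  have Seq: "S = {p..q}" unfolding Sd supp_def C_def[symmetric] Cpq using pq
    by (simp add: closure_greaterThanLessThan)
  obtain x where x: "x \<in> interior (supp e)" "I = {x..e x}" using fd unfolding fundamental_domain_def by blast
  have "interior (supp e) = {p<..<q}" using Sd Seq by (metis interior_atLeastAtMost_real)
  hence xin: "p < x" "x < q" using x(1) by auto
  have ex: "x < e x" using inside xin by blast
  have "e x < e q" using H(2) xin by (simp add: strict_mono_less)
  hence exq: "e x < q" using outside[of q] by simp
  have infS: "Inf S = p" "Sup S = q" using Seq pq by auto
  have infI: "Inf I = x" using x(2) ex by simp
  have "GOOD {p<..<q} e" unfolding GOOD_def using H(1,2) outside by blast
  thus ?thesis unfolding infS infI shp_def using H(3) p0 q1 xin ex exq inside Seq x(2) by simp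
qed

section \<open>Orbits of a generator\<close>

lemma int_seq_strict_mono:
  fixes s :: "int \<Rightarrow> real"
  assumes "\<And>m. s m < s (m+1)" shows "strict_mono s"
proof (rule strict_monoI)
  fix m n :: int assume "m < n"
  have "s m < s (m + int k + 1)" for k :: nat
  proof (induction k)
    case 0 then show ?case using assms[of m] by simp
  next
    case (Suc k)
    have "s (m + int k + 1) < s (m + int k + 1 + 1)" by (rule assms)
    then show ?case using Suc by simp
  qed
  from this[of "nat (n - m - 1)"] show "s m < s n" using \<open>m < n\<close> by simp
qed

lemma shp_GOOD: "shp e p q x \<Longrightarrow> GOOD {p<..<q} e" by (simp add: shp_def)

lemma shp_bij: "shp e p q x \<Longrightarrow> bij e" by (simp add: shp_def GOOD_def)

lemma shp_orbit_in:
  assumes "shp e p q x" shows "p < ipow e m x \<and> ipow e m x < q"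
proof -
  have "GOOD {p<..<q} (ipow e m)" using GOOD_ipow shp_GOOD assms by blast
  moreover have "x \<in> {p<..<q}" using assms unfolding shp_def by auto
  ultimately show ?thesis using GOOD_maps by fastforce
qed

lemma shp_orbit_step:
  assumes "shp e p q x" shows "ipow e m x < ipow e (m+1) x"
proof -
  have "ipow e (m+1) x = e (ipow e m x)" using ipow_Suc[OF shp_bij[OF assms]] by simp
  moreover have "ipow e m x < e (ipow e m x)" using shp_orbit_in[OF assms, of m] assms unfolding shp_def by blast
  ultimately show ?thesis by simp
qed

lemma shp_orbit_mono:
  assumes "shp e p q x" shows "strict_mono (\<lambda>m. ipow e m x)"
  by (rule int_seq_strict_mono) (rule shp_orbit_step[OF assms])

lemma shp_orbit_le:
  assumes "shp e p q x" shows "ipow e a x \<le> ipow e b x \<longleftrightarrow> a \<le> b"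
  using strict_mono_less_eq[OF shp_orbit_mono[OF assms], of a b] by simp

lemma shp_orbit_less:
  assumes "shp e p q x" shows "ipow e a x < ipow e b x \<longleftrightarrow> a < b"
  using strict_mono_less[OF shp_orbit_mono[OF assms], of a b] by simp

lemma shp_cofinal_up:
  assumes sh: "shp e p q x" and y: "y < q"
  shows "\<exists>m. y < ipow e m x"
proof (rule ccontr)
  assume "\<not> ?thesis"
  hence le: "\<And>m. ipow e m x \<le> y" by (simp add: not_less)
  define u where "u k = ipow e (int k) x" for k :: nat
  have inc: "incseq u" unfolding u_def
    by (intro monoI) (simp add: shp_orbit_le[OF sh])
  obtain L where L: "u \<longlonglongrightarrow> L" "\<And>i. u i \<le> L"
    using incseq_convergent[OF inc, of y] le unfolding u_def by blast
  have Ly: "L \<le> y" using LIMSEQ_le_const2[OF L(1)] le unfolding u_def by blast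
  have pL: "p < L" using L(2)[of 0] shp_orbit_in[OF sh, of 0] unfolding u_def by force
  have L01: "L \<in> {0..1}" using pL Ly y sh unfolding shp_def by auto
  have cont: "continuous_on {0..1} e" using sh unfolding shp_def by blast
  have uin: "u k \<in> {0..1}" for k using shp_orbit_in[OF sh, of "int k"] sh unfolding u_def shp_def by auto
  have "(\<lambda>k. e (u k)) \<longlonglongrightarrow> e L"
    by (rule continuous_on_tendsto_compose[OF cont L(1) L01]) (use uin in \<open>simp add: always_eventually\<close>)
  moreover have "(\<lambda>k. e (u k)) = (\<lambda>k. u (Suc k))"
  proof
    fix k
    have eq: "int (Suc k) = int k + 1" by simp
    show "e (u k) = u (Suc k)" unfolding u_def eq by (rule ipow_Suc_app[OF shp_bij[OF sh], symmetric])
  qed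
  moreover have "(\<lambda>k. u (Suc k)) \<longlonglongrightarrow> L" using LIMSEQ_Suc[OF L(1)] .
  ultimately have "e L = L" using LIMSEQ_unique by metis
  moreover have "L < e L" using sh pL Ly y unfolding shp_def by auto
  ultimately show False by simp
qed

lemma shp_cofinal_down:
  assumes sh: "shp e p q x" and y: "p < y"
  shows "\<exists>m. ipow e m x < y"
proof (rule ccontr)
  assume "\<not> ?thesis"
  hence le: "\<And>m. y \<le> ipow e m x" by (simp add: not_less)
  define u where "u k = ipow e (- int k) x" for k :: nat
  have dec: "antimono u" unfolding u_def
    by (intro antimonoI) (simp add: shp_orbit_le[OF sh])
  obtain L where L: "u \<longlonglongrightarrow> L" "\<And>i. L \<le> u i"
    using decseq_convergent[OF dec, of y] le unfolding u_def by blast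
  have Ly: "y \<le> L" using LIMSEQ_le_const[OF L(1)] le unfolding u_def by blast
  have Lq: "L < q" using L(2)[of 0] shp_orbit_in[OF sh, of 0] unfolding u_def by force
  have L01: "L \<in> {0..1}" using Lq Ly y sh unfolding shp_def by auto
  have cont: "continuous_on {0..1} e" using sh unfolding shp_def by blast
  have uin: "u k \<in> {0..1}" for k using shp_orbit_in[OF sh, of "- int k"] sh unfolding u_def shp_def by auto
  have "(\<lambda>k. e (u (Suc k))) \<longlonglongrightarrow> e L"
    by (rule continuous_on_tendsto_compose[OF cont LIMSEQ_Suc[OF L(1)] L01]) (use uin in \<open>simp add: always_eventually\<close>)
  moreover have "(\<lambda>k. e (u (Suc k))) = u"
  proof
    fix k
    have eq: "- int k = (- int (Suc k)) + 1" by simp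
    show "e (u (Suc k)) = u k" unfolding u_def
      by (subst eq, rule ipow_Suc_app[OF shp_bij[OF sh], symmetric])
  qed
  ultimately have "e L = L" using LIMSEQ_unique L(1) by metis
  moreover have "L < e L" using sh Lq Ly y unfolding shp_def by auto
  ultimately show False by simp
qed

lemma shp_cofinal:
  assumes sh: "shp e p q x" and y: "p < y" "y < q"
  shows "\<exists>m. ipow e m x \<le> y \<and> y < ipow e (m+1) x"
proof -
  let ?s = "\<lambda>m. ipow e m x"
  have sm: "strict_mono ?s" by (rule shp_orbit_mono[OF sh])
  obtain m0 where m0: "?s m0 < y" using shp_cofinal_down[OF sh y(1)] by blast
  obtain m1 where m1: "y < ?s m1" using shp_cofinal_up[OF sh y(2)] by blast
  have "m0 < m1" using m0 m1 sm by (metis less_trans not_less_iff_gr_or_eq strict_mono_less)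
  define P where "P j \<longleftrightarrow> y < ?s (m0 + int j)" for j :: nat
  have Pex: "P (nat (m1 - m0))" unfolding P_def using m1 \<open>m0 < m1\<close> by simp
  define j where "j = (LEAST j. P j)"
  have Pj: "P j" unfolding j_def by (rule LeastI[of P, OF Pex])
  have j0: "j \<noteq> 0"
  proof
    assume "j = 0" thus False using Pj m0 unfolding P_def by simp
  qed
  have "\<not> P (j - 1)"
  proof
    assume "P (j-1)"
    hence "j \<le> j - 1" unfolding j_def by (rule Least_le)
    thus False using j0 by simp
  qed
  hence "?s (m0 + int (j-1)) \<le> y" unfolding P_def by simp
  moreover have "m0 + int (j-1) + 1 = m0 + int j" using j0 by simp
  ultimately show ?thesis using Pj unfolding P_def by metis
qed

lemma shift_nofix:
  fixes \<sigma> :: "int \<Rightarrow> real"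
  assumes sm: "strict_mono \<sigma>" and gm: "strict_mono g" and sh: "\<And>m. g (\<sigma> m) = \<sigma> (m+n)"
    and y: "\<sigma> k \<le> y" "y \<le> \<sigma> (k+1)"
  shows "(0 < n \<longrightarrow> y < g y) \<and> (n < 0 \<longrightarrow> g y < y)"
proof (intro conjI impI)
  assume n: "0 < n"
  have "\<sigma> (k+n) \<le> g y" using sh[of k] y(1) gm by (metis strict_mono_less_eq)
  moreover have "\<sigma> (k+1) \<le> \<sigma> (k+n)" using n sm by (simp add: strict_mono_less_eq)
  moreover have "\<sigma> (k+1) < \<sigma> (k+1+n)" using n sm by (simp add: strict_mono_less)
  ultimately show "y < g y" using y(2) sh[of "k+1"]
    by (cases "y = \<sigma> (k+1)") auto
next
  assume n: "n < 0"
  have "g y \<le> \<sigma> (k+1+n)" using sh[of "k+1"] y(2) gm by (metis strict_mono_less_eq)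
  moreover have "\<sigma> (k+1+n) \<le> \<sigma> k" using n sm by (simp add: strict_mono_less_eq)
  moreover have "\<sigma> (k+n) < \<sigma> k" using n sm by (simp add: strict_mono_less)
  ultimately show "g y < y" using y(1) sh[of k]
    by (cases "y = \<sigma> k") auto
qed

section \<open>Gaps, components, linking\<close>

definition gap :: "(real \<Rightarrow> real) \<Rightarrow> real \<Rightarrow> real \<Rightarrow> bool" where
  "gap g a b \<longleftrightarrow> a < b \<and> 0 \<le> a \<and> b \<le> 1 \<and> g a = a \<and> g b = b \<and> (\<forall>y. a < y \<and> y < b \<longrightarrow> g y \<noteq> y)"

lemma below_bound:
  fixes a b c :: real
  assumes "a < b" "\<And>z. a < z \<Longrightarrow> z < b \<Longrightarrow> c \<le> z" shows "c \<le> a"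
proof (rule ccontr)
  assume "\<not> c \<le> a"
  hence "a < (a + min b c)/2" "(a + min b c)/2 < b" "(a + min b c)/2 < c" using assms(1) by auto
  thus False using assms(2)[of "(a + min b c)/2"] by linarith
qed

lemma above_bound:
  fixes a b c :: real
  assumes "a < b" "\<And>z. a < z \<Longrightarrow> z < b \<Longrightarrow> z \<le> c" shows "b \<le> c"
proof (rule ccontr)
  assume "\<not> b \<le> c"
  hence "a < (b + max a c)/2" "(b + max a c)/2 < b" "c < (b + max a c)/2" using assms(1) by auto
  thus False using assms(2)[of "(b + max a c)/2"] by linarith
qed

lemma comp_gap:
  assumes "a < b"
  shows "{a<..<b} \<in> components ({0..1} - Fix g) \<longleftrightarrow> gap g a b"
proof -
  define A where "A = {0..1} - Fix g"
  have Aiff: "y \<in> A \<longleftrightarrow> 0 \<le> y \<and> y \<le> 1 \<and> g y \<noteq> y" for y unfolding A_def Fix_def by auto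
  show ?thesis unfolding A_def[symmetric]
  proof
    assume c: "{a<..<b} \<in> components A"
    hence sub: "{a<..<b} \<subseteq> A" and max: "\<And>D. D \<noteq> {} \<Longrightarrow> {a<..<b} \<subseteq> D \<Longrightarrow> D \<subseteq> A \<Longrightarrow> connected D \<Longrightarrow> D = {a<..<b}"
      unfolding in_components_maximal by blast+
    have inA: "\<And>z. a < z \<Longrightarrow> z < b \<Longrightarrow> 0 \<le> z \<and> z \<le> 1 \<and> g z \<noteq> z" using sub Aiff by auto
    have a0: "0 \<le> a" using below_bound[OF assms] inA by blast
    have b1: "b \<le> 1" using above_bound[OF assms] inA by blast
    have ga: "g a = a"
    proof (rule ccontr)
      assume "g a \<noteq> a"
      hence "a \<in> A" using Aiff a0 b1 assms by auto
      hence "{a..<b} \<subseteq> A" using sub by (auto simp: less_le)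
      moreover have "connected {a..<b}" by simp
      moreover have "{a<..<b} \<subseteq> {a..<b}" "{a..<b} \<noteq> {}" using assms by auto
      ultimately have "{a..<b} = {a<..<b}" using max[of "{a..<b}"] by blast
      thus False using assms by (metis atLeastLessThan_iff greaterThanLessThan_iff less_irrefl order_refl)
    qed
    have gb: "g b = b"
    proof (rule ccontr)
      assume "g b \<noteq> b"
      hence "b \<in> A" using Aiff a0 b1 assms by auto
      hence "{a<..b} \<subseteq> A" using sub by (auto simp: less_le)
      moreover have "connected {a<..b}" by simp
      moreover have "{a<..<b} \<subseteq> {a<..b}" "{a<..b} \<noteq> {}" using assms by auto
      ultimately have "{a<..b} = {a<..<b}" using max[of "{a<..b}"] by blast
      thus False using assms by (metis greaterThanAtMost_iff greaterThanLessThan_iff less_irrefl order_refl)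
    qed
    show "gap g a b" unfolding gap_def using assms a0 b1 ga gb inA by blast
  next
    assume gp: "gap g a b"
    have sub: "{a<..<b} \<subseteq> A" using gp unfolding gap_def by (auto simp: Aiff)
    have aA: "a \<notin> A" "b \<notin> A" using gp unfolding gap_def by (auto simp: Aiff)
    show "{a<..<b} \<in> components A" unfolding in_components_maximal
    proof (intro conjI allI impI)
      show "{a<..<b} \<noteq> {}" using assms by simp
      show "{a<..<b} \<subseteq> A" by (rule sub)
      show "connected {a<..<b}" by simp
      fix D assume D: "D \<noteq> {} \<and> {a<..<b} \<subseteq> D \<and> D \<subseteq> A \<and> connected D"
      have "(a+b)/2 \<in> {a<..<b}" using assms by auto
      hence m: "(a+b)/2 \<in> D" using D by blast
      have cD: "\<And>u v w. u \<in> D \<Longrightarrow> v \<in> D \<Longrightarrow> u \<le> w \<Longrightarrow> w \<le> v \<Longrightarrow> w \<in> D"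
        using D unfolding connected_iff_interval by blast
      have "D \<subseteq> {a<..<b}"
      proof
        fix z assume z: "z \<in> D"
        have "z \<noteq> a" "z \<noteq> b" using z D aA by auto
        moreover have "\<not> z < a"
        proof
          assume "z < a"
          moreover have "a \<le> (a+b)/2" using assms by auto
          ultimately have "a \<in> D" using cD[OF z m, of a] by linarith
          thus False using D aA by auto
        qed
        moreover have "\<not> b < z"
        proof
          assume "b < z"
          moreover have "(a+b)/2 \<le> b" using assms by auto
          ultimately have "b \<in> D" using cD[OF m z, of b] by linarith
          thus False using D aA by auto
        qed
        ultimately show "z \<in> {a<..<b}" by auto
      qed
      thus "D = {a<..<b}" using D by blast
    qed
  qed
qed

definition okrel :: "real \<Rightarrow> real \<Rightarrow> real \<Rightarrow> real \<Rightarrow> bool" where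
  "okrel a b c d \<longleftrightarrow> b \<le> c \<or> d \<le> a \<or> (a = c \<and> b = d) \<or> (c < a \<and> b < d) \<or> (a < c \<and> d < b)"

lemma okrel_sym: "okrel a b c d \<Longrightarrow> okrel c d a b" unfolding okrel_def by auto

lemma okrel_not_linked:
  assumes "a < b" "c < d" "okrel a b c d" shows "\<not> linked a b c d"
proof -
  have "card ({a<..<b} \<inter> {c, d}) \<noteq> 1 \<and> card ({c<..<d} \<inter> {a, b}) \<noteq> 1"
    using assms(3) unfolding okrel_def
  proof (elim disjE)
    assume "b \<le> c"
    hence "{a<..<b} \<inter> {c, d} = {}" "{c<..<d} \<inter> {a, b} = {}" using assms by auto
    thus ?thesis by simp
  next
    assume "d \<le> a"
    hence "{a<..<b} \<inter> {c, d} = {}" "{c<..<d} \<inter> {a, b} = {}" using assms by auto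
    thus ?thesis by simp
  next
    assume "a = c \<and> b = d"
    hence "{a<..<b} \<inter> {c, d} = {}" "{c<..<d} \<inter> {a, b} = {}" using assms by auto
    thus ?thesis by simp
  next
    assume "c < a \<and> b < d"
    hence "{a<..<b} \<inter> {c, d} = {}" "{c<..<d} \<inter> {a, b} = {a, b}" using assms by auto
    thus ?thesis using assms by simp
  next
    assume "a < c \<and> d < b"
    hence "{a<..<b} \<inter> {c, d} = {c, d}" "{c<..<d} \<inter> {a, b} = {}" using assms by auto
    thus ?thesis using assms by simp
  qed
  thus ?thesis unfolding linked_def by simp
qed

lemma okrel_map:
  assumes "strict_mono (\<phi>::real \<Rightarrow> real)" "okrel a b c d"
  shows "okrel (\<phi> a) (\<phi> b) (\<phi> c) (\<phi> d)"
  using assms(2) unfolding okrel_def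
  by (auto simp: strict_mono_less_eq[OF assms(1)] strict_mono_less[OF assms(1)])

lemma gap_map:
  assumes "GOOD U \<phi>" "gap h a b" "0 \<le> \<phi> a" "\<phi> b \<le> 1"
  shows "gap (\<phi> \<circ> h \<circ> inv \<phi>) (\<phi> a) (\<phi> b)"
proof -
  have inv: "\<And>y. inv \<phi> (\<phi> y) = y" using GOOD_inv_app2[OF assms(1)] by blast
  have "\<forall>y. \<phi> a < y \<and> y < \<phi> b \<longrightarrow> \<phi> (h (inv \<phi> y)) \<noteq> y"
  proof (intro allI impI)
    fix y assume y: "\<phi> a < y \<and> y < \<phi> b"
    define z where "z = inv \<phi> y"
    have yz: "y = \<phi> z" unfolding z_def using GOOD_inv_app[OF assms(1)] by simp
    have "a < z" "z < b" using y GOOD_less[OF assms(1)] unfolding yz by auto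
    hence "h z \<noteq> z" using assms(2) unfolding gap_def by blast
    thus "\<phi> (h (inv \<phi> y)) \<noteq> y" unfolding yz inv GOOD_inj[OF assms(1)] .
  qed
  thus ?thesis using assms(2-4) GOOD_less[OF assms(1)] unfolding gap_def by (simp add: inv)
qed

type_synonym trip = "(real \<Rightarrow> real) \<times> real set \<times> real set"

definition UU :: "trip set \<Rightarrow> real set" where
  "UU \<S> = (\<Union>t\<in>\<S>. {Inf (fst (snd t))<..<Sup (fst (snd t))})"

definition CL1 :: "trip set \<Rightarrow> bool" where
  "CL1 \<S> \<longleftrightarrow> (\<forall>g\<in>gen_group (fst ` \<S>). \<forall>a b. gap g a b \<longrightarrow>
     (\<exists>w\<in>gen_group (fst ` \<S>). \<exists>e S I. (e,S,I) \<in> \<S> \<and> w (Inf S) = a \<and> w (Sup S) = b))"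

definition CL2 :: "trip set \<Rightarrow> bool" where
  "CL2 \<S> \<longleftrightarrow> (\<forall>e S I. (e,S,I) \<in> \<S> \<longrightarrow> (\<forall>g\<in>gen_group (fst ` \<S>).
     g (Inf S) = Inf S \<and> g (Sup S) = Sup S \<longrightarrow> (\<exists>n. \<forall>m. g (ipow e m (Inf I)) = ipow e (m+n) (Inf I))))"

definition CL3 :: "trip set \<Rightarrow> bool" where
  "CL3 \<S> \<longleftrightarrow> (\<forall>g\<in>gen_group (fst ` \<S>). \<forall>h\<in>gen_group (fst ` \<S>). \<forall>a b c d.
     gap g a b \<and> gap h c d \<longrightarrow> okrel a b c d)"

definition CL :: "trip set \<Rightarrow> bool" where "CL \<S> \<longleftrightarrow> CL1 \<S> \<and> CL2 \<S> \<and> CL3 \<S>"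

lemma fund_rel:
  assumes "fundamental_system \<S>" "(f,S,I) \<in> \<S>" "(g,S',I') \<in> \<S>" "(f,S,I) \<noteq> (g,S',I')"
  shows "interior S \<inter> interior S' = {} \<or> S \<subseteq> I' \<or> S' \<subseteq> I"
proof -
  have "\<forall>(f, S, I) \<in> \<S>. \<forall>(g, S', I') \<in> \<S>. (f, S, I) \<noteq> (g, S', I') \<longrightarrow>
         interior S \<inter> interior S' = {} \<or> S \<subseteq> I' \<or> S' \<subseteq> I"
    by (rule conjunct2[OF assms(1)[unfolded fundamental_system_def]])
  from bspec[OF bspec[OF this assms(2), simplified] assms(3)] show ?thesis using assms(4) by simp
qed

lemma fund_sub:
  assumes F: "fundamental_system \<S>" and sub: "\<S>' \<subseteq> \<S>" shows "fundamental_system \<S>'"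
proof -
  have 1: "\<forall>(f, S, I) \<in> \<S>'. f \<in> homeo_plus \<and> simple_homeo f \<and> positive_homeo f
                        \<and> S = supp f \<and> I \<subseteq> S \<and> fundamental_domain f I"
    using conjunct1[OF F[unfolded fundamental_system_def]] sub by blast
  have 2: "\<forall>(f, S, I) \<in> \<S>'. \<forall>(g, S', I') \<in> \<S>'. (f, S, I) \<noteq> (g, S', I') \<longrightarrow>
         interior S \<inter> interior S' = {} \<or> S \<subseteq> I' \<or> S' \<subseteq> I"
    using fund_rel[OF F] sub by fastforce
  show ?thesis unfolding fundamental_system_def using 1 2 by blast
qed

lemma open_UU: "open (UU \<S>)" unfolding UU_def by (intro open_UN) auto

lemma GG_GOOD:
  assumes F: "fundamental_system \<S>" and g: "g \<in> gen_group (fst ` \<S>)"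
  shows "GOOD (UU \<S>) g"
  using g
proof (induction rule: gen_group.induct)
  case gen_id then show ?case by (rule GOOD_id)
next
  case (gen_base f)
  then obtain S I where t: "(f,S,I) \<in> \<S>" by auto
  have "GOOD {Inf S<..<Sup S} f" using triple_shape[OF F t] shp_GOOD by blast
  moreover have "{Inf S<..<Sup S} \<subseteq> UU \<S>" unfolding UU_def using t by force
  ultimately show ?case using GOOD_mono by blast
next
  case (gen_inv f) then show ?case using GOOD_inv by blast
next
  case (gen_comp f g) then show ?case using GOOD_comp by blast
qed

lemma gen_empty: "g \<in> gen_group {} \<Longrightarrow> g = id"
  by (induction rule: gen_group.induct) (auto simp: inv_id)

lemma CL_empty: "CL {}"
proof -
  have nogap: "\<not> gap id a b" for a b
  proof
    assume "gap id a b"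
    hence "a < b" "\<forall>y. a < y \<and> y < b \<longrightarrow> id y \<noteq> y" unfolding gap_def by auto
    thus False using dense by (metis id_apply)
  qed
  show ?thesis unfolding CL_def CL1_def CL2_def CL3_def using nogap gen_empty by auto
qed

lemma edge_not_in:
  fixes a b :: real
  assumes "a < b" "{a<..<b} \<subseteq> U1" "U1 \<inter> U2 = {}" "open U2"
  shows "a \<notin> U2" "b \<notin> U2"
proof -
  show "a \<notin> U2"
  proof
    assume "a \<in> U2"
    then obtain \<epsilon> where \<epsilon>: "\<epsilon> > 0" "\<And>z. \<bar>z - a\<bar> < \<epsilon> \<Longrightarrow> z \<in> U2"
      using assms(4) unfolding open_real by blast
    define z where "z = a + min (\<epsilon>/2) ((b-a)/2)"
    have "\<bar>z - a\<bar> < \<epsilon>" using \<epsilon>(1) assms(1) unfolding z_def by (simp add: min_def)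
    hence "z \<in> U2" by (rule \<epsilon>(2))
    moreover have "z \<in> {a<..<b}" using \<epsilon> assms(1) unfolding z_def by (auto simp: min_def field_simps)
    ultimately show False using assms(2,3) by blast
  qed
  show "b \<notin> U2"
  proof
    assume "b \<in> U2"
    then obtain \<epsilon> where \<epsilon>: "\<epsilon> > 0" "\<And>z. \<bar>z - b\<bar> < \<epsilon> \<Longrightarrow> z \<in> U2"
      using assms(4) unfolding open_real by blast
    define z where "z = b - min (\<epsilon>/2) ((b-a)/2)"
    have "\<bar>z - b\<bar> < \<epsilon>" using \<epsilon>(1) assms(1) unfolding z_def by (simp add: min_def)
    hence "z \<in> U2" by (rule \<epsilon>(2))
    moreover have "z \<in> {a<..<b}" using \<epsilon> assms(1) unfolding z_def by (auto simp: min_def field_simps)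
    ultimately show False using assms(2,3) by blast
  qed
qed

lemma gap_split:
  assumes G1: "GOOD U1 g1" and G2: "GOOD U2 g2" and dj: "U1 \<inter> U2 = {}"
    and o1: "open U1" and o2: "open U2" and gp: "gap (g1 \<circ> g2) a b"
  shows "(gap g1 a b \<and> {a<..<b} \<subseteq> U1) \<or> (gap g2 a b \<and> {a<..<b} \<subseteq> U2)"
proof -
  have f1: "\<And>z. z \<notin> U1 \<Longrightarrow> g1 z = z" and f2: "\<And>z. z \<notin> U2 \<Longrightarrow> g2 z = z"
    using G1 G2 unfolding GOOD_def by blast+
  have com: "g1 \<circ> g2 = g2 \<circ> g1" by (rule GOOD_commute[OF G1 G2 dj])
  have ab: "a < b" "\<And>y. a < y \<Longrightarrow> y < b \<Longrightarrow> g1 (g2 y) \<noteq> y" using gp unfolding gap_def by auto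
  have sub: "{a<..<b} \<subseteq> U1 \<union> U2"
  proof
    fix y assume y: "y \<in> {a<..<b}"
    show "y \<in> U1 \<union> U2"
    proof (rule ccontr)
      assume "y \<notin> U1 \<union> U2"
      hence "g1 (g2 y) = y" using f1 f2 by auto
      thus False using ab(2)[of y] y by auto
    qed
  qed
  have "U1 \<inter> {a<..<b} = {} \<or> U2 \<inter> {a<..<b} = {}"
    by (rule connectedD[OF _ o1 o2]) (use dj sub in auto)
  thus ?thesis
  proof
    assume e1: "U1 \<inter> {a<..<b} = {}"
    hence s2: "{a<..<b} \<subseteq> U2" using sub by blast
    have nb: "a \<notin> U1" "b \<notin> U1" using edge_not_in[OF ab(1) s2 _ o1] dj by blast+
    have "gap g2 a b"
    proof -
      have "g2 a = a" "g2 b = b" using gp nb f1 com unfolding gap_def by (metis comp_apply)+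
      moreover have "g2 y \<noteq> y" if "a < y" "y < b" for y
        using ab(2)[OF that] f1[of y] com e1 that by (metis IntI comp_apply empty_iff greaterThanLessThan_iff)
      ultimately show ?thesis using gp unfolding gap_def by blast
    qed
    thus ?thesis using s2 by blast
  next
    assume e2: "U2 \<inter> {a<..<b} = {}"
    hence s1: "{a<..<b} \<subseteq> U1" using sub by blast
    have nb: "a \<notin> U2" "b \<notin> U2" using edge_not_in[OF ab(1) s1 dj o2] by blast+
    have "gap g1 a b"
    proof -
      have "g1 a = a" "g1 b = b" using gp nb f2 unfolding gap_def by (metis comp_apply)+
      moreover have "g1 y \<noteq> y" if "a < y" "y < b" for y
      proof -
        have "y \<notin> U2" using e2 that by auto
        thus ?thesis using ab(2)[OF that] f2[of y] by auto
      qed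
      ultimately show ?thesis using gp unfolding gap_def by blast
    qed
    thus ?thesis using s1 by blast
  qed
qed

lemma disj_okrel:
  fixes a b c d :: real
  assumes "a < b" "c < d" "{a<..<b} \<subseteq> U1" "{c<..<d} \<subseteq> U2" "U1 \<inter> U2 = {}"
  shows "okrel a b c d"
proof (rule ccontr)
  assume "\<not> okrel a b c d"
  hence "c < b" "a < d" unfolding okrel_def by auto
  define z where "z = (max a c + min b d)/2"
  have "z \<in> {a<..<b}" "z \<in> {c<..<d}" using assms(1,2) \<open>c < b\<close> \<open>a < d\<close> unfolding z_def
    by (auto simp: max_def min_def field_simps)
  thus False using assms(3-5) by blast
qed

lemma UU_Un: "UU (A \<union> B) = UU A \<union> UU B" unfolding UU_def by blast

lemma UU_mem:
  assumes "fundamental_system \<S>" "(e,S,I) \<in> \<S>" shows "{Inf S<..<Sup S} \<subseteq> UU \<S>"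
  using assms(2) unfolding UU_def by force

lemma split_dec:
  assumes F1: "fundamental_system \<S>1" and F2: "fundamental_system \<S>2" and dj: "UU \<S>1 \<inter> UU \<S>2 = {}"
    and g: "g \<in> gen_group (fst ` (\<S>1 \<union> \<S>2))"
  shows "\<exists>g1\<in>gen_group (fst ` \<S>1). \<exists>g2\<in>gen_group (fst ` \<S>2). g = g1 \<circ> g2"
  using g
proof (induction rule: gen_group.induct)
  case gen_id
  then show ?case by (metis comp_id gen_group.gen_id)
next
  case (gen_base f)
  then show ?case by (metis comp_id id_comp gen_group.gen_base gen_group.gen_id image_Un Un_iff)
next
  case (gen_inv f)
  then obtain g1 g2 where g: "g1 \<in> gen_group (fst ` \<S>1)" "g2 \<in> gen_group (fst ` \<S>2)" "f = g1 \<circ> g2" by blast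
  have G1: "GOOD (UU \<S>1) g1" "GOOD (UU \<S>2) g2" using GG_GOOD F1 F2 g by blast+
  have "inv f = inv g2 \<circ> inv g1" unfolding g(3) using G1 unfolding GOOD_def by (simp add: o_inv_distrib)
  also have "\<dots> = inv g1 \<circ> inv g2" using GOOD_commute[OF GOOD_inv[OF G1(2)] GOOD_inv[OF G1(1)]] dj by blast
  finally show ?case using g by (blast intro: gen_group.gen_inv)
next
  case (gen_comp f h)
  then obtain f1 f2 h1 h2 where g: "f1 \<in> gen_group (fst ` \<S>1)" "f2 \<in> gen_group (fst ` \<S>2)" "f = f1 \<circ> f2"
    "h1 \<in> gen_group (fst ` \<S>1)" "h2 \<in> gen_group (fst ` \<S>2)" "h = h1 \<circ> h2" by blast
  have G1: "GOOD (UU \<S>2) f2" "GOOD (UU \<S>1) h1" using GG_GOOD F1 F2 g by blast+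
  have "f2 \<circ> h1 = h1 \<circ> f2" using GOOD_commute[OF G1] dj by blast
  hence c: "\<And>y. f2 (h1 y) = h1 (f2 y)" by (metis comp_apply)
  have "f \<circ> h = (f1 \<circ> h1) \<circ> (f2 \<circ> h2)" unfolding g by (simp add: fun_eq_iff c)
  thus ?case using g by (blast intro: gen_group.gen_comp)
qed

lemma split_CL2_half:
  assumes F1: "fundamental_system \<S>1" and F2: "fundamental_system \<S>2" and dj: "UU \<S>1 \<inter> UU \<S>2 = {}"
    and C: "CL2 \<S>1" and t: "(e,S,I) \<in> \<S>1"
    and g1: "g1 \<in> gen_group (fst ` \<S>1)" and g2: "g2 \<in> gen_group (fst ` \<S>2)"
    and fx: "g1 (g2 (Inf S)) = Inf S" "g1 (g2 (Sup S)) = Sup S"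
  shows "\<exists>n. \<forall>m. g1 (g2 (ipow e m (Inf I))) = ipow e (m+n) (Inf I)"
proof -
  have sh: "shp e (Inf S) (Sup S) (Inf I)" using triple_shape[OF F1 t] by blast
  have pq: "Inf S < Sup S" using sh unfolding shp_def by auto
  have sub: "{Inf S<..<Sup S} \<subseteq> UU \<S>1" by (rule UU_mem[OF F1 t])
  have G2: "GOOD (UU \<S>2) g2" using GG_GOOD[OF F2 g2] .
  have f2: "\<And>z. z \<notin> UU \<S>2 \<Longrightarrow> g2 z = z" using G2 unfolding GOOD_def by blast
  have nb: "Inf S \<notin> UU \<S>2" "Sup S \<notin> UU \<S>2" using edge_not_in[OF pq sub dj open_UU] by blast+
  have "g1 (Inf S) = Inf S" "g1 (Sup S) = Sup S" using fx f2 nb by auto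
  then obtain n where n: "\<forall>m. g1 (ipow e m (Inf I)) = ipow e (m+n) (Inf I)"
    using C t g1 unfolding CL2_def by blast
  have "\<forall>m. g2 (ipow e m (Inf I)) = ipow e m (Inf I)"
  proof
    fix m
    have "ipow e m (Inf I) \<in> {Inf S<..<Sup S}" using shp_orbit_in[OF sh] by auto
    hence "ipow e m (Inf I) \<notin> UU \<S>2" using sub dj by blast
    thus "g2 (ipow e m (Inf I)) = ipow e m (Inf I)" by (rule f2)
  qed
  thus ?thesis using n by auto
qed

lemma CL_split:
  assumes F1: "fundamental_system \<S>1" and F2: "fundamental_system \<S>2" and dj: "UU \<S>1 \<inter> UU \<S>2 = {}"
    and C1: "CL \<S>1" and C2: "CL \<S>2"
  shows "CL (\<S>1 \<union> \<S>2)"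
proof -
  let ?G = "gen_group (fst ` (\<S>1 \<union> \<S>2))"
  let ?G1 = "gen_group (fst ` \<S>1)" and ?G2 = "gen_group (fst ` \<S>2)"
  have s1: "\<And>g. g \<in> ?G1 \<Longrightarrow> g \<in> ?G" by (erule gen_group_mono) auto
  have s2: "\<And>g. g \<in> ?G2 \<Longrightarrow> g \<in> ?G" by (erule gen_group_mono) auto
  have dj2: "UU \<S>2 \<inter> UU \<S>1 = {}" using dj by blast
  have dec: "\<And>g. g \<in> ?G \<Longrightarrow> \<exists>g1\<in>?G1. \<exists>g2\<in>?G2. g = g1 \<circ> g2"
    using split_dec[OF F1 F2 dj] by blast
  have gs: "\<And>g a b. g \<in> ?G \<Longrightarrow> gap g a b \<Longrightarrow>
      (\<exists>g1\<in>?G1. gap g1 a b \<and> {a<..<b} \<subseteq> UU \<S>1) \<or> (\<exists>g2\<in>?G2. gap g2 a b \<and> {a<..<b} \<subseteq> UU \<S>2)"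
  proof -
    fix g a b assume g: "g \<in> ?G" and gp: "gap g a b"
    obtain g1 g2 where gg: "g1 \<in> ?G1" "g2 \<in> ?G2" "g = g1 \<circ> g2" using dec[OF g] by blast
    show "(\<exists>g1\<in>?G1. gap g1 a b \<and> {a<..<b} \<subseteq> UU \<S>1) \<or> (\<exists>g2\<in>?G2. gap g2 a b \<and> {a<..<b} \<subseteq> UU \<S>2)"
      using gap_split[OF GG_GOOD[OF F1 gg(1)] GG_GOOD[OF F2 gg(2)] dj open_UU open_UU] gp gg by blast
  qed
  have cl1: "CL1 (\<S>1 \<union> \<S>2)" unfolding CL1_def
  proof (intro ballI allI impI)
    fix g a b assume g: "g \<in> ?G" and gp: "gap g a b"
    from gs[OF g gp] show "\<exists>w\<in>?G. \<exists>e S I. (e,S,I) \<in> \<S>1 \<union> \<S>2 \<and> w (Inf S) = a \<and> w (Sup S) = b"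
    proof
      assume "\<exists>g1\<in>?G1. gap g1 a b \<and> {a<..<b} \<subseteq> UU \<S>1"
      then obtain g1 where "g1 \<in> ?G1" "gap g1 a b" by blast
      then obtain w e S I where "w \<in> ?G1" "(e,S,I) \<in> \<S>1" "w (Inf S) = a" "w (Sup S) = b"
        using C1 unfolding CL_def CL1_def by blast
      thus ?thesis using s1 by blast
    next
      assume "\<exists>g2\<in>?G2. gap g2 a b \<and> {a<..<b} \<subseteq> UU \<S>2"
      then obtain g2 where "g2 \<in> ?G2" "gap g2 a b" by blast
      then obtain w e S I where "w \<in> ?G2" "(e,S,I) \<in> \<S>2" "w (Inf S) = a" "w (Sup S) = b"
        using C2 unfolding CL_def CL1_def by blast
      thus ?thesis using s2 by blast
    qed
  qed
  have cl2: "CL2 (\<S>1 \<union> \<S>2)" unfolding CL2_def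
  proof (intro allI impI ballI)
    fix e S I g assume t: "(e,S,I) \<in> \<S>1 \<union> \<S>2" and g: "g \<in> ?G"
      and fx: "g (Inf S) = Inf S \<and> g (Sup S) = Sup S"
    obtain g1 g2 where gg: "g1 \<in> ?G1" "g2 \<in> ?G2" "g = g1 \<circ> g2" using dec[OF g] by blast
    have com: "g1 \<circ> g2 = g2 \<circ> g1"
      by (rule GOOD_commute[OF GG_GOOD[OF F1 gg(1)] GG_GOOD[OF F2 gg(2)] dj])
    show "\<exists>n. \<forall>m. g (ipow e m (Inf I)) = ipow e (m+n) (Inf I)"
    proof (cases "(e,S,I) \<in> \<S>1")
      case True
      have "\<exists>n. \<forall>m. g1 (g2 (ipow e m (Inf I))) = ipow e (m+n) (Inf I)"
        using split_CL2_half[OF F1 F2 dj _ True gg(1,2)] C1 fx gg(3) unfolding CL_def by simp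
      thus ?thesis using gg(3) by simp
    next
      case False
      hence t2: "(e,S,I) \<in> \<S>2" using t by blast
      have gc: "g = g2 \<circ> g1" using gg(3) com by simp
      have "\<exists>n. \<forall>m. g2 (g1 (ipow e m (Inf I))) = ipow e (m+n) (Inf I)"
        using split_CL2_half[OF F2 F1 dj2 _ t2 gg(2,1)] C2 fx gc unfolding CL_def by simp
      thus ?thesis using gc by simp
    qed
  qed
  have cl3: "CL3 (\<S>1 \<union> \<S>2)" unfolding CL3_def
  proof (intro ballI allI impI)
    fix g h a b c d assume g: "g \<in> ?G" and h: "h \<in> ?G" and gp: "gap g a b \<and> gap h c d"
    have ab: "a < b" "c < d" using gp unfolding gap_def by auto
    show "okrel a b c d"
      using gs[OF g conjunct1[OF gp]] gs[OF h conjunct2[OF gp]]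
    proof (elim disjE bexE conjE)
      fix g1 h1 assume "g1 \<in> ?G1" "gap g1 a b" "h1 \<in> ?G1" "gap h1 c d"
      thus ?thesis using C1 unfolding CL_def CL3_def by blast
    next
      fix g1 h2 assume "{a<..<b} \<subseteq> UU \<S>1" "{c<..<d} \<subseteq> UU \<S>2"
      thus ?thesis using disj_okrel[OF ab] dj by blast
    next
      fix g2 h1 assume "{a<..<b} \<subseteq> UU \<S>2" "{c<..<d} \<subseteq> UU \<S>1"
      thus ?thesis using disj_okrel[OF ab] dj2 by blast
    next
      fix g2 h2 assume "g2 \<in> ?G2" "gap g2 a b" "h2 \<in> ?G2" "gap h2 c d"
      thus ?thesis using C2 unfolding CL_def CL3_def by blast
    qed
  qed
  show ?thesis unfolding CL_def using cl1 cl2 cl3 by blast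
qed

section \<open>Root case\<close>

lemma ipow_inv_app: "bij f \<Longrightarrow> ipow f k (ipow f (-k) y) = y"
  using ipow_add_app[of f k "-k" y] by simp

lemma ipow_inv_app2: "bij f \<Longrightarrow> ipow f (-k) (ipow f k y) = y"
  using ipow_add_app[of f "-k" k y] by simp

lemma CL_root:
  assumes F: "fundamental_system (insert (f,Sf,Jf) \<S>')"
    and inI: "\<And>e S I. (e,S,I) \<in> \<S>' \<Longrightarrow> S \<subseteq> Jf"
    and C: "CL \<S>'"
  shows "CL (insert (f,Sf,Jf) \<S>')"
proof -
  define p where "p = Inf Sf"
  define q where "q = Sup Sf"
  define x where "x = Inf Jf"
  have F': "fundamental_system \<S>'" using fund_sub[OF F] by blast
  have tf: "(f,Sf,Jf) \<in> insert (f,Sf,Jf) \<S>'" by simp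
  have sh: "shp f p q x" and Jfeq: "Jf = {x..f x}" and Sfeq: "Sf = {p..q}"
    using triple_shape[OF F tf] unfolding p_def q_def x_def by blast+
  have bf: "bij f" using shp_bij[OF sh] .
  have Gf: "GOOD {p<..<q} f" using shp_GOOD[OF sh] .
  have Gfk: "\<And>k. GOOD {p<..<q} (ipow f k)" using GOOD_ipow[OF Gf] .
  have shx: "p < x" "x < f x" "f x < q" "0 \<le> p" "q \<le> 1" using sh unfolding shp_def by auto
  let ?H = "gen_group (fst ` \<S>')"
  let ?G = "gen_group (fst ` insert (f,Sf,Jf) \<S>')"
  have HG: "\<And>h. h \<in> ?H \<Longrightarrow> h \<in> ?G" by (erule gen_group_mono) auto
  have fG: "f \<in> ?G" by (rule gen_group.gen_base) simp
  have UUsub: "UU \<S>' \<subseteq> {x<..<f x}"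
  proof
    fix z assume "z \<in> UU \<S>'"
    then obtain e S I where t: "(e,S,I) \<in> \<S>'" and z: "z \<in> {Inf S<..<Sup S}" unfolding UU_def by force
    have "S = {Inf S..Sup S}" using triple_shape[OF F' t] by blast
    moreover have "Inf S < Sup S" using triple_shape[OF F' t] unfolding shp_def by auto
    ultimately have "Inf S \<in> S" "Sup S \<in> S" by (metis atLeastAtMost_iff less_imp_le order_refl)+
    hence "Inf S \<in> {x..f x}" "Sup S \<in> {x..f x}" using inI[OF t] unfolding Jfeq by blast+
    hence "x \<le> Inf S" "Sup S \<le> f x" by auto
    thus "z \<in> {x<..<f x}" using z by auto
  qed
  have hG: "\<And>h. h \<in> ?H \<Longrightarrow> GOOD {x<..<f x} h" using GG_GOOD[OF F'] UUsub GOOD_mono by blast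
  have hfix: "\<And>h. h \<in> ?H \<Longrightarrow> h x = x \<and> h (f x) = f x" using hG unfolding GOOD_def by auto
  have hI: "\<And>h y. h \<in> ?H \<Longrightarrow> y \<in> {x..f x} \<Longrightarrow> h y \<in> {x..f x}"
  proof -
    fix h y assume h: "h \<in> ?H" and y: "y \<in> {x..f x}"
    have "h x \<le> h y" "h y \<le> h (f x)" using y GOOD_le[OF hG[OF h]] by auto
    thus "h y \<in> {x..f x}" using hfix[OF h] by auto
  qed
  have hinvI: "\<And>h y. h \<in> ?H \<Longrightarrow> y \<in> {x..f x} \<Longrightarrow> inv h y \<in> {x..f x}"
    using hI gen_group.gen_inv by blast
  have orb_le: "\<And>a b. ipow f a x \<le> ipow f b x \<longleftrightarrow> a \<le> b" using shp_orbit_le[OF sh] .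
  have orb_less: "\<And>a b. ipow f a x < ipow f b x \<longleftrightarrow> a < b" using shp_orbit_less[OF sh] .
  have fx1: "ipow f m (f x) = ipow f (m+1) x" for m using ipow_add_app[OF bf, of m 1 x] by simp
  have P1: "\<And>m y. y \<in> {x..f x} \<Longrightarrow> ipow f m x \<le> ipow f m y \<and> ipow f m y \<le> ipow f (m+1) x"
    using GOOD_le[OF Gfk] fx1 by (metis atLeastAtMost_iff)
  define inG where "inG g \<longleftrightarrow> GOOD {p<..<q} g \<and>
      (\<exists>n. \<forall>m. \<exists>h\<in>?H. \<forall>y\<in>{x..f x}. g (ipow f m y) = ipow f (m+n) (h y))" for g
  have allG: "inG g" if g: "g \<in> ?G" for g
    using g
  proof (induction rule: gen_group.induct)
    case gen_id
    have "\<forall>m. \<exists>h\<in>?H. \<forall>y\<in>{x..f x}. id (ipow f m y) = ipow f (m+0) (h y)"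
      by (intro allI bexI[of _ id]) (auto intro: gen_group.gen_id)
    then show ?case unfolding inG_def using GOOD_id by blast
  next
    case (gen_base e)
    show ?case
    proof (cases "e = f")
      case True
      have "\<forall>m. \<exists>h\<in>?H. \<forall>y\<in>{x..f x}. f (ipow f m y) = ipow f (m+1) (h y)"
        by (intro allI bexI[of _ id]) (auto intro: gen_group.gen_id simp: ipow_Suc_app[OF bf])
      then show ?thesis unfolding inG_def True using Gf by blast
    next
      case False
      hence eH: "e \<in> ?H" using gen_base by (auto intro: gen_group.gen_base)
      have Ge: "GOOD {x<..<f x} e" using hG[OF eH] .
      have "{x<..<f x} \<subseteq> {p<..<q}" using shx by auto
      hence Ge2: "GOOD {p<..<q} e" using GOOD_mono Ge by blast
      have "\<exists>h\<in>?H. \<forall>y\<in>{x..f x}. e (ipow f m y) = ipow f (m+0) (h y)" for m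
      proof (cases "m = 0")
        case True then show ?thesis using eH by (intro bexI[of _ e]) auto
      next
        case False
        have "e (ipow f m y) = ipow f m y" if y: "y \<in> {x..f x}" for y
        proof -
          have "ipow f m y \<notin> {x<..<f x}"
          proof (cases "m > 0")
            case True
            have "ipow f 1 x \<le> ipow f m x" using True orb_le[of 1 m] by linarith
            thus ?thesis using P1[OF y, of m] by simp
          next
            case False
            hence "m + 1 \<le> 0" using \<open>m \<noteq> 0\<close> by simp
            hence "ipow f (m+1) x \<le> ipow f 0 x" using orb_le by blast
            thus ?thesis using P1[OF y, of m] by simp
          qed
          thus ?thesis using Ge unfolding GOOD_def by blast
        qed
        then show ?thesis by (intro bexI[of _ id]) (auto intro: gen_group.gen_id)
      qed
      then show ?thesis unfolding inG_def using Ge2 by blast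
    qed
  next
    case (gen_inv g)
    then obtain n where G: "GOOD {p<..<q} g"
      and fam: "\<forall>m. \<exists>h\<in>?H. \<forall>y\<in>{x..f x}. g (ipow f m y) = ipow f (m+n) (h y)"
      unfolding inG_def by blast
    have "\<exists>h\<in>?H. \<forall>z\<in>{x..f x}. inv g (ipow f m z) = ipow f (m + -n) (h z)" for m
    proof -
      obtain h where h: "h \<in> ?H" "\<forall>y\<in>{x..f x}. g (ipow f (m-n) y) = ipow f (m-n+n) (h y)"
        using fam by blast
      have "inv g (ipow f m z) = ipow f (m + -n) (inv h z)" if z: "z \<in> {x..f x}" for z
      proof -
        have y: "inv h z \<in> {x..f x}" using hinvI[OF h(1) z] .
        have "h (inv h z) = z" using GOOD_inv_app[OF hG[OF h(1)]] .
        hence "g (ipow f (m-n) (inv h z)) = ipow f m z" using h(2) y by simp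
        hence "inv g (ipow f m z) = ipow f (m-n) (inv h z)" using GOOD_inv_app2[OF G] by metis
        thus ?thesis by simp
      qed
      thus ?thesis using h(1) gen_group.gen_inv by blast
    qed
    then show ?case unfolding inG_def using GOOD_inv[OF G] by blast
  next
    case (gen_comp g1 g2)
    from gen_comp.IH obtain n1 n2 where G: "GOOD {p<..<q} g1" "GOOD {p<..<q} g2"
      and fam1: "\<forall>m. \<exists>h\<in>?H. \<forall>y\<in>{x..f x}. g1 (ipow f m y) = ipow f (m+n1) (h y)"
      and fam2: "\<forall>m. \<exists>h\<in>?H. \<forall>y\<in>{x..f x}. g2 (ipow f m y) = ipow f (m+n2) (h y)"
      unfolding inG_def by blast
    have "\<exists>h\<in>?H. \<forall>y\<in>{x..f x}. (g1 \<circ> g2) (ipow f m y) = ipow f (m+(n1+n2)) (h y)" for m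
    proof -
      obtain h2 where h2: "h2 \<in> ?H" "\<forall>y\<in>{x..f x}. g2 (ipow f m y) = ipow f (m+n2) (h2 y)"
        using fam2 by blast
      obtain h1 where h1: "h1 \<in> ?H" "\<forall>y\<in>{x..f x}. g1 (ipow f (m+n2) y) = ipow f (m+n2+n1) (h1 y)"
        using fam1 by blast
      have "(g1 \<circ> g2) (ipow f m y) = ipow f (m+(n1+n2)) ((h1 \<circ> h2) y)" if y: "y \<in> {x..f x}" for y
        using h1(2) h2(2) hI[OF h2(1) y] y by (simp add: ac_simps)
      thus ?thesis using h1(1) h2(1) gen_group.gen_comp by blast
    qed
    then show ?case unfolding inG_def using GOOD_comp[OF G] by blast
  qed
  have shift: "\<exists>n. GOOD {p<..<q} g \<and> (\<forall>m. \<exists>h\<in>?H. \<forall>y\<in>{x..f x}. g (ipow f m y) = ipow f (m+n) (h y))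
      \<and> (\<forall>m. g (ipow f m x) = ipow f (m+n) x)" if g: "g \<in> ?G" for g
  proof -
    obtain n where G: "GOOD {p<..<q} g" and fam: "\<forall>m. \<exists>h\<in>?H. \<forall>y\<in>{x..f x}. g (ipow f m y) = ipow f (m+n) (h y)"
      using allG[OF g] unfolding inG_def by blast
    have "g (ipow f m x) = ipow f (m+n) x" for m
    proof -
      obtain h where h: "h \<in> ?H" "\<forall>y\<in>{x..f x}. g (ipow f m y) = ipow f (m+n) (h y)" using fam by blast
      have "x \<in> {x..f x}" using shx by auto
      hence "g (ipow f m x) = ipow f (m+n) (h x)" using h(2) by blast
      thus ?thesis using hfix[OF h(1)] by simp
    qed
    hence "\<forall>m. g (ipow f m x) = ipow f (m+n) x" by blast
    with G fam show ?thesis by (intro exI[of _ n]) simp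
  qed
  let ?\<sigma> = "\<lambda>m. ipow f m x"
  have sm: "strict_mono ?\<sigma>" by (rule shp_orbit_mono[OF sh])
  have cls: "(a = p \<and> b = q) \<or> (\<exists>k h a' b'. h \<in> ?H \<and> gap h a' b' \<and> x \<le> a' \<and> b' \<le> f x
      \<and> a = ipow f k a' \<and> b = ipow f k b')" if g: "g \<in> ?G" and gp: "gap g a b" for g a b
  proof -
    obtain n where G: "GOOD {p<..<q} g" and fam: "\<forall>m. \<exists>h\<in>?H. \<forall>y\<in>{x..f x}. g (ipow f m y) = ipow f (m+n) (h y)"
      and sft: "\<forall>m. g (ipow f m x) = ipow f (m+n) x" using shift[OF g] by blast
    have out: "\<And>y. y \<notin> {p<..<q} \<Longrightarrow> g y = y" using G unfolding GOOD_def by blast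
    have gab: "a < b" "g a = a" "g b = b" "\<And>y. a < y \<Longrightarrow> y < b \<Longrightarrow> g y \<noteq> y" "0 \<le> a" "b \<le> 1"
      using gp unfolding gap_def by auto
    have inpq: "\<And>y. a < y \<Longrightarrow> y < b \<Longrightarrow> p < y \<and> y < q" using gab(4) out by fastforce
    show ?thesis
    proof (cases "n = 0")
      case False
      have nofix: "g y \<noteq> y" if y: "p < y" "y < q" for y
      proof -
        obtain k where k: "?\<sigma> k \<le> y" "y < ?\<sigma> (k+1)" using shp_cofinal[OF sh y] by blast
        have "(0 < n \<longrightarrow> y < g y) \<and> (n < 0 \<longrightarrow> g y < y)"
          by (rule shift_nofix[OF sm _ _ k(1)]) (use G sft k(2) in \<open>auto simp: GOOD_def\<close>)
        thus ?thesis using False by (cases "n > 0") auto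
      qed
      have "p \<le> a" using below_bound[OF gab(1)] inpq by (meson less_imp_le)
      moreover have "b \<le> q" using above_bound[OF gab(1)] inpq by (meson less_imp_le)
      moreover have "\<not> (p < a \<and> a < q)" using nofix gab(2) by blast
      moreover have "\<not> (p < b \<and> b < q)" using nofix gab(3) by blast
      ultimately show ?thesis using gab(1) by force
    next
      case True
      have fixo: "\<And>m. g (?\<sigma> m) = ?\<sigma> m" using sft True by simp
      define y0 where "y0 = (a+b)/2"
      have y0: "a < y0" "y0 < b" using gab(1) unfolding y0_def by auto
      obtain k where k: "?\<sigma> k \<le> y0" "y0 < ?\<sigma> (k+1)" using shp_cofinal[OF sh] inpq[OF y0] by blast
      have ak: "?\<sigma> k \<le> a"
      proof (rule ccontr)
        assume "\<not> ?\<sigma> k \<le> a"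
        hence "a < ?\<sigma> k" "?\<sigma> k < b" using k y0 by auto
        thus False using gab(4) fixo by blast
      qed
      have bk: "b \<le> ?\<sigma> (k+1)"
      proof (rule ccontr)
        assume "\<not> b \<le> ?\<sigma> (k+1)"
        hence "a < ?\<sigma> (k+1)" "?\<sigma> (k+1) < b" using k y0 by auto
        thus False using gab(4) fixo by blast
      qed
      obtain h where h: "h \<in> ?H" "\<forall>y\<in>{x..f x}. g (ipow f k y) = ipow f (k+n) (h y)" using fam by blast
      have hk: "\<And>y. y \<in> {x..f x} \<Longrightarrow> g (ipow f k y) = ipow f k (h y)" using h(2) True by simp
      define a' where "a' = ipow f (-k) a"
      define b' where "b' = ipow f (-k) b"
      have aa: "a = ipow f k a'" "b = ipow f k b'" unfolding a'_def b'_def using ipow_inv_app[OF bf] by auto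
      have "ipow f (-k) (?\<sigma> k) \<le> a'" unfolding a'_def using ak GOOD_le[OF Gfk] by blast
      hence xa: "x \<le> a'" using ipow_inv_app2[OF bf] by simp
      have "b' \<le> ipow f (-k) (?\<sigma> (k+1))" unfolding b'_def using bk GOOD_le[OF Gfk] by blast
      moreover have "ipow f (-k) (?\<sigma> (k+1)) = f x" using ipow_add_app[OF bf, of "-k" "k+1" x] by simp
      ultimately have bx: "b' \<le> f x" by simp
      have ab': "a' < b'" using gab(1) GOOD_less[OF Gfk] unfolding a'_def b'_def by blast
      have "gap h a' b'"
      proof -
        have a'I: "a' \<in> {x..f x}" "b' \<in> {x..f x}" using xa bx ab' by auto
        have "ipow f k (h a') = ipow f k a'" using hk[OF a'I(1)] aa gab(2) by simp
        hence ha: "h a' = a'" using GOOD_inj[OF Gfk] by blast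
        have "ipow f k (h b') = ipow f k b'" using hk[OF a'I(2)] aa gab(3) by simp
        hence hb: "h b' = b'" using GOOD_inj[OF Gfk] by blast
        have "h y \<noteq> y" if y: "a' < y" "y < b'" for y
        proof
          assume hy: "h y = y"
          have yI: "y \<in> {x..f x}" using y xa bx by auto
          have "g (ipow f k y) = ipow f k y" using hk[OF yI] hy by simp
          moreover have "a < ipow f k y" "ipow f k y < b" using y GOOD_less[OF Gfk] aa by auto
          ultimately show False using gab(4) by blast
        qed
        thus ?thesis unfolding gap_def using ab' ha hb xa bx shx by auto
      qed
      thus ?thesis using h(1) xa bx aa by blast
    qed
  qed
  have cl1: "CL1 (insert (f,Sf,Jf) \<S>')" unfolding CL1_def
  proof (intro ballI allI impI)
    fix g a b assume g: "g \<in> ?G" and gp: "gap g a b"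
    show "\<exists>w\<in>?G. \<exists>e S I. (e,S,I) \<in> insert (f,Sf,Jf) \<S>' \<and> w (Inf S) = a \<and> w (Sup S) = b"
      using cls[OF g gp]
    proof (elim disjE exE conjE)
      assume "a = p" "b = q"
      thus ?thesis
        by (intro bexI[of _ id] exI[of _ f] exI[of _ Sf] exI[of _ Jf]) (auto simp: p_def q_def intro: gen_group.gen_id)
    next
      fix k h a' b' assume h: "h \<in> ?H" "gap h a' b'" and aa: "a = ipow f k a'" "b = ipow f k b'"
      obtain w e S I where w: "w \<in> ?H" "(e,S,I) \<in> \<S>'" "w (Inf S) = a'" "w (Sup S) = b'"
        using C h unfolding CL_def CL1_def by blast
      have "ipow f k \<circ> w \<in> ?G" using gen_group.gen_comp[OF gen_group_ipow[OF fG] HG[OF w(1)]] .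
      thus ?thesis using w aa
        by (intro bexI[of _ "ipow f k \<circ> w"] exI[of _ e] exI[of _ S] exI[of _ I]) auto
    qed
  qed
  have cl3: "CL3 (insert (f,Sf,Jf) \<S>')" unfolding CL3_def
  proof (intro ballI allI impI)
    fix g g' a b c d assume g: "g \<in> ?G" and g': "g' \<in> ?G" and gp: "gap g a b \<and> gap g' c d"
    have inner: "p < ipow f k u \<and> ipow f k v < q \<and> ipow f k v \<le> ipow f (k+1) x \<and> ipow f k x \<le> ipow f k u"
      if "x \<le> u" "v \<le> f x" "u \<le> v" for k u v
    proof -
      have uI: "u \<in> {x..f x}" "v \<in> {x..f x}" using that by auto
      have "p < ipow f k x" "ipow f (k+1) x < q" using shp_orbit_in[OF sh] by auto
      thus ?thesis using P1[OF uI(1), of k] P1[OF uI(2), of k] by auto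
    qed
    show "okrel a b c d"
      using cls[OF g conjunct1[OF gp]] cls[OF g' conjunct2[OF gp]]
    proof (elim disjE exE conjE)
      assume "a = p" "b = q" "c = p" "d = q" thus ?thesis unfolding okrel_def by auto
    next
      fix k h c' d' assume A: "a = p" "b = q" "gap h c' d'" "x \<le> c'" "d' \<le> f x" "c = ipow f k c'" "d = ipow f k d'"
      have "c' \<le> d'" using A(3) unfolding gap_def by simp
      hence "a < c" "d < b" using inner[of c' d' k] A(1,2,4-7) by auto
      thus ?thesis unfolding okrel_def by simp
    next
      fix k h a' b' assume A: "c = p" "d = q" "gap h a' b'" "x \<le> a'" "b' \<le> f x" "a = ipow f k a'" "b = ipow f k b'"
      have "a' \<le> b'" using A(3) unfolding gap_def by simp
      hence "c < a" "b < d" using inner[of a' b' k] A(1,2,4-7) by auto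
      thus ?thesis unfolding okrel_def by simp
    next
      fix k h a' b' k2 h2 c' d'
      assume A: "h \<in> ?H" "gap h a' b'" "x \<le> a'" "b' \<le> f x" "a = ipow f k a'" "b = ipow f k b'"
        and B: "h2 \<in> ?H" "gap h2 c' d'" "x \<le> c'" "d' \<le> f x" "c = ipow f k2 c'" "d = ipow f k2 d'"
      have "a' \<le> b'" "c' \<le> d'" using A(2) B(2) unfolding gap_def by simp_all
      hence ia: "ipow f k x \<le> a" "b \<le> ipow f (k+1) x" "ipow f k2 x \<le> c" "d \<le> ipow f (k2+1) x"
        using inner[of a' b' k] inner[of c' d' k2] A(3-6) B(3-6) by auto
      show ?thesis
      proof (cases "k = k2")
        case True
        have "okrel a' b' c' d'" using C A B unfolding CL_def CL3_def by blast
        hence "okrel (ipow f k a') (ipow f k b') (ipow f k c') (ipow f k d')"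
          by (rule okrel_map[rotated]) (use Gfk in \<open>simp add: GOOD_def\<close>)
        thus ?thesis using A B True by simp
      next
        case False
        show ?thesis
        proof (cases "k < k2")
          case True
          hence "ipow f (k+1) x \<le> ipow f k2 x" using orb_le by simp
          hence "b \<le> c" using ia by linarith
          thus ?thesis unfolding okrel_def by simp
        next
          case False
          hence "ipow f (k2+1) x \<le> ipow f k x" using orb_le \<open>k \<noteq> k2\<close> by simp
          hence "d \<le> a" using ia by linarith
          thus ?thesis unfolding okrel_def by simp
        qed
      qed
    qed
  qed
  have cl2: "CL2 (insert (f,Sf,Jf) \<S>')" unfolding CL2_def
  proof (intro allI impI ballI)
    fix e S I g assume t: "(e,S,I) \<in> insert (f,Sf,Jf) \<S>'" and g: "g \<in> ?G"
      and fx: "g (Inf S) = Inf S \<and> g (Sup S) = Sup S"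
    obtain n where G: "GOOD {p<..<q} g" and fam: "\<forall>m. \<exists>h\<in>?H. \<forall>y\<in>{x..f x}. g (ipow f m y) = ipow f (m+n) (h y)"
      and sft: "\<forall>m. g (ipow f m x) = ipow f (m+n) x" using shift[OF g] by blast
    show "\<exists>n. \<forall>m. g (ipow e m (Inf I)) = ipow e (m+n) (Inf I)"
    proof (cases "(e,S,I) = (f,Sf,Jf)")
      case True
      hence "e = f" "I = Jf" by auto
      thus ?thesis using sft unfolding x_def by blast
    next
      case False
      hence t': "(e,S,I) \<in> \<S>'" using t by blast
      have she: "shp e (Inf S) (Sup S) (Inf I)" and Seq: "S = {Inf S..Sup S}" using triple_shape[OF F' t'] by blast+
      have pqe: "Inf S < Sup S" using she unfolding shp_def by auto
      have "Inf S \<in> S" "Sup S \<in> S" using Seq pqe by (metis atLeastAtMost_iff less_imp_le order_refl)+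
      hence SI: "Inf S \<in> {x..f x}" "Sup S \<in> {x..f x}" using inI[OF t'] unfolding Jfeq by blast+
      obtain h where h: "h \<in> ?H" "\<forall>y\<in>{x..f x}. g (ipow f 0 y) = ipow f (0+n) (h y)" using fam by blast
      have gh: "\<And>y. y \<in> {x..f x} \<Longrightarrow> g y = ipow f n (h y)" using h(2) by simp
      have n0: "n = 0"
      proof (rule ccontr)
        assume "n \<noteq> 0"
        show False
        proof (cases "n > 0")
          case True
          have "ipow f n x \<le> ipow f n (h (Inf S))" using P1[OF hI[OF h(1) SI(1)]] by blast
          moreover have "ipow f 1 x \<le> ipow f n x" using True orb_le[of 1 n] by linarith
          ultimately have "f x \<le> g (Inf S)" using gh[OF SI(1)] by simp
          thus False using fx SI(2) pqe by auto
        next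
          case False
          hence "n + 1 \<le> 0" using \<open>n \<noteq> 0\<close> by simp
          hence "ipow f (n+1) x \<le> ipow f 0 x" using orb_le by blast
          moreover have "ipow f n (h (Sup S)) \<le> ipow f (n+1) x" using P1[OF hI[OF h(1) SI(2)]] by blast
          ultimately have "g (Sup S) \<le> x" using gh[OF SI(2)] by simp
          thus False using fx SI(1) pqe by auto
        qed
      qed
      have gh0: "\<And>y. y \<in> {x..f x} \<Longrightarrow> g y = h y" using gh n0 by simp
      have "h (Inf S) = Inf S \<and> h (Sup S) = Sup S" using fx gh0[OF SI(1)] gh0[OF SI(2)] by simp
      then obtain n' where n': "\<forall>m. h (ipow e m (Inf I)) = ipow e (m+n') (Inf I)"
        using C t' h(1) unfolding CL_def CL2_def by blast
      have "\<forall>m. g (ipow e m (Inf I)) = ipow e (m+n') (Inf I)"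
      proof
        fix m
        have "ipow e m (Inf I) \<in> {x..f x}" using shp_orbit_in[OF she, of m] SI by auto
        thus "g (ipow e m (Inf I)) = ipow e (m+n') (Inf I)" using gh0 n' by simp
      qed
      thus ?thesis by blast
    qed
  qed
  show ?thesis unfolding CL_def using cl1 cl2 cl3 by blast
qed

section \<open>Finite and general systems\<close>

lemma triple_interior:
  assumes F: "fundamental_system \<S>" and t: "(e,S,I) \<in> \<S>"
  shows "interior S = {Inf S<..<Sup S}" "Inf S < Sup S" "S = {Inf S..Sup S}"
    "I = {Inf I..e (Inf I)}" "Inf S < Inf I" "I \<subseteq> S"
proof -
  have sh: "shp e (Inf S) (Sup S) (Inf I)" and Se: "S = {Inf S..Sup S}" and Ie: "I = {Inf I..e (Inf I)}"
    using triple_shape[OF F t] by blast+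
  show "S = {Inf S..Sup S}" "I = {Inf I..e (Inf I)}" by (fact Se, fact Ie)
  show "interior S = {Inf S<..<Sup S}" by (subst Se) (rule interior_atLeastAtMost_real)
  show "Inf S < Sup S" "Inf S < Inf I" using sh unfolding shp_def by auto
  have "Inf S \<le> Inf I" "e (Inf I) \<le> Sup S" using sh unfolding shp_def by auto
  hence "{Inf I..e (Inf I)} \<subseteq> {Inf S..Sup S}" by auto
  thus "I \<subseteq> S" using Se Ie by simp
qed

lemma CL_finite: "finite \<S> \<Longrightarrow> fundamental_system \<S> \<Longrightarrow> CL \<S>"
proof (induction "card \<S>" arbitrary: \<S> rule: less_induct)
  case less
  note F = less.prems(2)
  show ?case
  proof (cases "\<S> = {}")
    case True then show ?thesis using CL_empty by simp
  next
    case False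
    let ?Sp = "(\<lambda>t. fst (snd t)) ` \<S>"
    obtain M where M: "M \<in> ?Sp" "\<forall>B\<in>?Sp. M \<le> B \<longrightarrow> M = B"
      using finite_has_maximal[of ?Sp] less.prems(1) False by blast
    obtain t where t: "t \<in> \<S>" "M = fst (snd t)" using M(1) by blast
    obtain f Jf where "t = (f,M,Jf)" using t(2) by (cases t) auto
    hence t0: "(f, M, Jf) \<in> \<S>" using t(1) by simp
    have maxM: "M = S" if "(e,S,I) \<in> \<S>" "M \<subseteq> S" for e S I
    proof -
      have "S = fst (snd (e,S,I))" by simp
      hence "S \<in> ?Sp" using that(1) by (rule image_eqI)
      thus ?thesis using M(2) that(2) by blast
    qed
    define \<S>1 where "\<S>1 = {t\<in>\<S>. fst (snd t) \<subseteq> M}"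
    define \<S>2 where "\<S>2 = \<S> - \<S>1"
    have t01: "(f,M,Jf) \<in> \<S>1" using t0 unfolding \<S>1_def by simp
    have JM: "Jf \<subseteq> M" using triple_interior[OF F t0] by blast
    show ?thesis
    proof (cases "\<S>2 = {}")
      case False
      have sub1: "\<S>1 \<subseteq> \<S>" and sub2: "\<S>2 \<subseteq> \<S>" unfolding \<S>1_def \<S>2_def by auto
      have F1: "fundamental_system \<S>1" and F2: "fundamental_system \<S>2" using fund_sub[OF F] sub1 sub2 by blast+
      have un: "\<S> = \<S>1 \<union> \<S>2" unfolding \<S>2_def using sub1 by blast
      have "\<S>1 \<subset> \<S>" using False sub1 unfolding \<S>2_def by blast
      hence c1: "card \<S>1 < card \<S>" by (rule psubset_card_mono[OF less.prems(1)])
      have "\<S>2 \<subset> \<S>" using t01 t0 sub2 unfolding \<S>2_def by blast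
      hence c2: "card \<S>2 < card \<S>" by (rule psubset_card_mono[OF less.prems(1)])
      have dj: "UU \<S>1 \<inter> UU \<S>2 = {}"
      proof (rule ccontr)
        assume "UU \<S>1 \<inter> UU \<S>2 \<noteq> {}"
        then obtain z where "z \<in> UU \<S>1" "z \<in> UU \<S>2" by blast
        then obtain u1 u2 where u: "u1 \<in> \<S>1" "z \<in> {Inf (fst (snd u1))<..<Sup (fst (snd u1))}"
          "u2 \<in> \<S>2" "z \<in> {Inf (fst (snd u2))<..<Sup (fst (snd u2))}" unfolding UU_def by blast
        obtain e1 S1 I1 where "u1 = (e1,S1,I1)" by (cases u1) auto
        hence t1: "(e1,S1,I1) \<in> \<S>1" and z1: "z \<in> {Inf S1<..<Sup S1}" using u by auto
        obtain e2 S2 I2 where "u2 = (e2,S2,I2)" by (cases u2) auto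
        hence t2: "(e2,S2,I2) \<in> \<S>2" and z2: "z \<in> {Inf S2<..<Sup S2}" using u by auto
        have t1S: "(e1,S1,I1) \<in> \<S>" "S1 \<subseteq> M" using t1 unfolding \<S>1_def by auto
        have t2S: "(e2,S2,I2) \<in> \<S>" "\<not> S2 \<subseteq> M" using t2 unfolding \<S>1_def \<S>2_def by auto
        have "z \<in> interior S1" using z1 triple_interior[OF F t1S(1)] by simp
        hence zM: "z \<in> interior M" using t1S(2) interior_mono by blast
        have zS2: "z \<in> interior S2" using z2 triple_interior[OF F t2S(1)] by simp
        have ne: "(f,M,Jf) \<noteq> (e2,S2,I2)" using t2S(2) by auto
        have "interior M \<inter> interior S2 = {} \<or> M \<subseteq> I2 \<or> S2 \<subseteq> Jf" by (rule fund_rel[OF F t0 t2S(1) ne])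
        moreover have "\<not> S2 \<subseteq> Jf" using JM t2S(2) by blast
        moreover have "\<not> M \<subseteq> I2"
        proof
          assume "M \<subseteq> I2"
          hence "M \<subseteq> S2" using triple_interior[OF F t2S(1)] by blast
          thus False using maxM[OF t2S(1)] t2S(2) by blast
        qed
        ultimately show False using zM zS2 by blast
      qed
      have "finite \<S>1" "finite \<S>2" using less.prems(1) sub1 sub2 finite_subset by blast+
      hence "CL \<S>1" "CL \<S>2" using less.hyps[OF c1] less.hyps[OF c2] F1 F2 by blast+
      thus ?thesis using CL_split[OF F1 F2 dj] un by simp
    next
      case True
      define \<S>' where "\<S>' = \<S> - {(f,M,Jf)}"
      have ins: "\<S> = insert (f,M,Jf) \<S>'" unfolding \<S>'_def using t0 by blast
      have sub': "\<S>' \<subseteq> \<S>" unfolding \<S>'_def by blast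
      have c': "card \<S>' < card \<S>" unfolding \<S>'_def by (rule card_Diff1_less[OF less.prems(1) t0])
      have "finite \<S>'" using less.prems(1) sub' finite_subset by blast
      hence "CL \<S>'" using less.hyps[OF c'] fund_sub[OF F sub'] by blast
      moreover have "S \<subseteq> Jf" if t: "(e,S,I) \<in> \<S>'" for e S I
      proof -
        have tS: "(e,S,I) \<in> \<S>" and ne: "(f,M,Jf) \<noteq> (e,S,I)" using t unfolding \<S>'_def by auto
        have "(e,S,I) \<in> \<S>1" using tS True unfolding \<S>2_def by blast
        hence SM: "S \<subseteq> M" unfolding \<S>1_def by simp
        have "interior M \<inter> interior S = {} \<or> M \<subseteq> I \<or> S \<subseteq> Jf" by (rule fund_rel[OF F t0 tS ne])
        moreover have "interior M \<inter> interior S \<noteq> {}"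
        proof -
          have "interior S \<subseteq> interior M" using SM interior_mono by blast
          moreover have "interior S \<noteq> {}" using triple_interior[OF F tS] by simp
          ultimately show ?thesis by blast
        qed
        moreover have "\<not> M \<subseteq> I"
        proof
          assume "M \<subseteq> I"
          have "Inf S \<in> S" using triple_interior[OF F tS] by (metis atLeastAtMost_iff less_imp_le order_refl)
          hence "Inf S \<in> I" using SM \<open>M \<subseteq> I\<close> by blast
          moreover have "I = {Inf I..e (Inf I)}" "Inf S < Inf I" using triple_interior[OF F tS] by blast+
          ultimately show False by (metis atLeastAtMost_iff not_le)
        qed
        ultimately show ?thesis by blast
      qed
      moreover have F0: "fundamental_system (insert (f,M,Jf) \<S>')" using F ins by simp
      ultimately have "CL (insert (f,M,Jf) \<S>')" using CL_root[OF F0] by blast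
      thus ?thesis using ins by simp
    qed
  qed
qed

lemma gen_fin: "g \<in> gen_group A \<Longrightarrow> \<exists>B. finite B \<and> B \<subseteq> A \<and> g \<in> gen_group B"
proof (induction rule: gen_group.induct)
  case gen_id then show ?case using gen_group.gen_id[of "{}"] by blast
next
  case (gen_base f) then show ?case by (intro exI[of _ "{f}"]) (auto intro: gen_group.gen_base)
next
  case (gen_inv f) then show ?case by (auto intro: gen_group.gen_inv)
next
  case (gen_comp f g)
  then obtain B1 B2 where "finite B1" "B1 \<subseteq> A" "f \<in> gen_group B1" "finite B2" "B2 \<subseteq> A" "g \<in> gen_group B2" by blast
  moreover have "f \<in> gen_group (B1 \<union> B2)" "g \<in> gen_group (B1 \<union> B2)"
    using calculation gen_group_mono by blast+
  ultimately have "f \<circ> g \<in> gen_group (B1 \<union> B2)" "finite (B1 \<union> B2)" "B1 \<union> B2 \<subseteq> A"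
    using gen_group.gen_comp by blast+
  thus ?case by blast
qed

lemma gen_fin_sys:
  assumes "g \<in> gen_group (fst ` \<S>)"
  shows "\<exists>\<S>'. \<S>' \<subseteq> \<S> \<and> finite \<S>' \<and> g \<in> gen_group (fst ` \<S>')"
proof -
  obtain B where B: "finite B" "B \<subseteq> fst ` \<S>" "g \<in> gen_group B" using gen_fin[OF assms] by blast
  obtain C where C: "C \<subseteq> \<S>" "finite C" "B = fst ` C" using finite_subset_image[OF B(1,2)] by blast
  show ?thesis using B(3) C by (intro exI[of _ C]) simp
qed

lemma gen_sys_mono: "g \<in> gen_group (fst ` \<S>') \<Longrightarrow> \<S>' \<subseteq> \<S> \<Longrightarrow> g \<in> gen_group (fst ` \<S>)"
  by (erule gen_group_mono) (erule image_mono)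

lemma CL_all:
  assumes F: "fundamental_system \<S>" shows "CL \<S>"
proof -
  let ?G = "gen_group (fst ` \<S>)"
  have fin: "CL \<S>'" if "\<S>' \<subseteq> \<S>" "finite \<S>'" for \<S>'
    using CL_finite[OF that(2) fund_sub[OF F that(1)]] .
  have cl1: "CL1 \<S>" unfolding CL1_def
  proof (intro ballI allI impI)
    fix g a b assume g: "g \<in> ?G" and gp: "gap g a b"
    obtain \<S>' where S': "\<S>' \<subseteq> \<S>" "finite \<S>'" "g \<in> gen_group (fst ` \<S>')" using gen_fin_sys[OF g] by blast
    have "CL1 \<S>'" using fin[OF S'(1,2)] unfolding CL_def by blast
    then obtain w e S I where w: "w \<in> gen_group (fst ` \<S>')" "(e,S,I) \<in> \<S>'" "w (Inf S) = a" "w (Sup S) = b"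
      using S'(3) gp unfolding CL1_def by blast
    have "w \<in> ?G" using gen_sys_mono[OF w(1) S'(1)] .
    thus "\<exists>w\<in>?G. \<exists>e S I. (e,S,I) \<in> \<S> \<and> w (Inf S) = a \<and> w (Sup S) = b"
      using w S'(1) by (intro bexI[of _ w] exI[of _ e] exI[of _ S] exI[of _ I]) auto
  qed
  have cl2: "CL2 \<S>" unfolding CL2_def
  proof (intro allI impI ballI)
    fix e S I g assume t: "(e,S,I) \<in> \<S>" and g: "g \<in> ?G" and fx: "g (Inf S) = Inf S \<and> g (Sup S) = Sup S"
    obtain \<S>' where S': "\<S>' \<subseteq> \<S>" "finite \<S>'" "g \<in> gen_group (fst ` \<S>')" using gen_fin_sys[OF g] by blast
    have sub: "insert (e,S,I) \<S>' \<subseteq> \<S>" "finite (insert (e,S,I) \<S>')" using S' t by auto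
    have "g \<in> gen_group (fst ` insert (e,S,I) \<S>')" using gen_sys_mono[OF S'(3)] by blast
    moreover have "CL2 (insert (e,S,I) \<S>')" using fin[OF sub] unfolding CL_def by blast
    ultimately show "\<exists>n. \<forall>m. g (ipow e m (Inf I)) = ipow e (m+n) (Inf I)"
      using fx unfolding CL2_def by blast
  qed
  have cl3: "CL3 \<S>" unfolding CL3_def
  proof (intro ballI allI impI)
    fix g h a b c d assume g: "g \<in> ?G" and h: "h \<in> ?G" and gp: "gap g a b \<and> gap h c d"
    obtain \<S>1 where S1: "\<S>1 \<subseteq> \<S>" "finite \<S>1" "g \<in> gen_group (fst ` \<S>1)" using gen_fin_sys[OF g] by blast
    obtain \<S>2 where S2: "\<S>2 \<subseteq> \<S>" "finite \<S>2" "h \<in> gen_group (fst ` \<S>2)" using gen_fin_sys[OF h] by blast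
    have sub: "\<S>1 \<union> \<S>2 \<subseteq> \<S>" "finite (\<S>1 \<union> \<S>2)" using S1 S2 by auto
    have "g \<in> gen_group (fst ` (\<S>1 \<union> \<S>2))" "h \<in> gen_group (fst ` (\<S>1 \<union> \<S>2))"
      using gen_sys_mono[OF S1(3)] gen_sys_mono[OF S2(3)] by blast+
    moreover have "CL3 (\<S>1 \<union> \<S>2)" using fin[OF sub] unfolding CL_def by blast
    ultimately show "okrel a b c d" using gp unfolding CL3_def by blast
  qed
  show ?thesis unfolding CL_def using cl1 cl2 cl3 by blast
qed

lemma stab_fix:
  assumes "GOOD U g" "g ` {a..b} = {a..b}" "a \<le> b"
  shows "g a = a" "g b = b"
proof -
  have "a \<in> g ` {a..b}" using assms(2,3) by simp
  then obtain z where z: "z \<in> {a..b}" "g z = a" by blast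
  have "g a \<le> g z" using z(1) GOOD_le[OF assms(1), of a z] by simp
  moreover have "g a \<in> g ` {a..b}" using assms(3) by simp
  hence "g a \<in> {a..b}" using assms(2) by simp
  ultimately show "g a = a" using z by simp
  have "b \<in> g ` {a..b}" using assms(2,3) by simp
  then obtain z' where z': "z' \<in> {a..b}" "g z' = b" by blast
  have "g z' \<le> g b" using z'(1) GOOD_le[OF assms(1), of z' b] by simp
  moreover have "g b \<in> g ` {a..b}" using assms(3) by simp
  hence "g b \<in> {a..b}" using assms(2) by simp
  ultimately show "g b = b" using z' by simp
qed

lemma stab_mk:
  assumes "GOOD U c" "c a = a" "c b = b"
  shows "c ` {a..b} = {a..b}"
proof
  show "c ` {a..b} \<subseteq> {a..b}"
  proof
    fix z assume "z \<in> c ` {a..b}"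
    then obtain y where y: "y \<in> {a..b}" "z = c y" by blast
    have "c a \<le> c y" "c y \<le> c b" using y GOOD_le[OF assms(1)] by auto
    thus "z \<in> {a..b}" using y assms(2,3) by simp
  qed
  show "{a..b} \<subseteq> c ` {a..b}"
  proof
    fix z assume z: "z \<in> {a..b}"
    have Gi: "GOOD U (inv c)" using GOOD_inv[OF assms(1)] .
    have ia: "inv c a = a" "inv c b = b"
      using GOOD_inv_app2[OF assms(1), of a] GOOD_inv_app2[OF assms(1), of b] assms(2,3) by simp_all
    have "inv c a \<le> inv c z" "inv c z \<le> inv c b" using z GOOD_le[OF Gi] by auto
    hence "inv c z \<in> {a..b}" using ia by simp
    moreover have "z = c (inv c z)" using GOOD_inv_app[OF assms(1)] by simp
    ultimately show "z \<in> c ` {a..b}" by blast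
  qed
qed

theorem propositionp:
  assumes "fundamental_system \<S>"
  shows "without_linked_fixed_points (gen_group (fst ` \<S>)) \<and>
         totally_rational (gen_group (fst ` \<S>))"
proof -
  note F = assms
  let ?G = "gen_group (fst ` \<S>)"
  have C: "CL \<S>" by (rule CL_all[OF F])
  have sfp: "\<exists>g\<in>?G. gap g a b" if sp: "succ_fixed_pair ?G a b" for a b
  proof -
    obtain g where "a < b" "g \<in> ?G" "{a<..<b} \<in> components ({0..1} - Fix g)"
      using sp unfolding succ_fixed_pair_def by blast
    thus ?thesis using comp_gap[of a b g] by blast
  qed
  have wl: "without_linked_fixed_points ?G" unfolding without_linked_fixed_points_def
  proof (intro allI impI)
    fix a b c d assume "succ_fixed_pair ?G a b \<and> succ_fixed_pair ?G c d"
    then obtain g h where g: "g \<in> ?G" "gap g a b" and h: "h \<in> ?G" "gap h c d" using sfp by blast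
    have "okrel a b c d" using C g h unfolding CL_def CL3_def by blast
    moreover have "a < b" "c < d" using g h unfolding gap_def by auto
    ultimately show "\<not> linked a b c d" using okrel_not_linked by blast
  qed
  have tr: "totally_rational ?G" unfolding totally_rational_def
  proof (intro allI impI)
    fix a b assume "succ_fixed_pair ?G a b"
    then obtain g0 where g0: "g0 \<in> ?G" "gap g0 a b" using sfp by blast
    have ab: "a < b" using g0 unfolding gap_def by simp
    obtain w e S I where w: "w \<in> ?G" "(e,S,I) \<in> \<S>" "w (Inf S) = a" "w (Sup S) = b"
      using C g0 unfolding CL_def CL1_def by blast
    define p where "p = Inf S"
    define q where "q = Sup S"
    define x where "x = Inf I"
    have sh: "shp e p q x" unfolding p_def q_def x_def using triple_shape[OF F w(2)] by blast
    have be: "bij e" using shp_bij[OF sh] .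
    have wp: "w p = a" "w q = b" using w unfolding p_def q_def by auto
    have Gw: "GOOD (UU \<S>) w" using GG_GOOD[OF F w(1)] .
    have iwa: "inv w a = p" "inv w b = q" using GOOD_inv_app2[OF Gw, of p] GOOD_inv_app2[OF Gw, of q] wp by simp_all
    define \<sigma> where "\<sigma> m = w (ipow e m x)" for m
    have sm: "strict_mono \<sigma>"
    proof (rule strict_monoI)
      fix m n :: int assume "m < n"
      hence "ipow e m x < ipow e n x" using shp_orbit_less[OF sh] by simp
      thus "\<sigma> m < \<sigma> n" unfolding \<sigma>_def using GOOD_less[OF Gw] by simp
    qed
    have CL2S: "CL2 \<S>" using C unfolding CL_def by blast
    have stabG: "\<And>g. g \<in> stab ?G a b \<Longrightarrow> g \<in> ?G \<and> GOOD (UU \<S>) g \<and> g a = a \<and> g b = b"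
    proof -
      fix g assume g: "g \<in> stab ?G a b"
      hence gG: "g \<in> ?G" and im: "g ` {a..b} = {a..b}" unfolding stab_def by auto
      have Gg: "GOOD (UU \<S>) g" using GG_GOOD[OF F gG] .
      show "g \<in> ?G \<and> GOOD (UU \<S>) g \<and> g a = a \<and> g b = b"
        using gG Gg stab_fix[OF Gg im] ab by simp
    qed
    have hshift: "\<exists>n. \<forall>m. g (\<sigma> m) = \<sigma> (m+n)" if g: "g \<in> stab ?G a b" for g
    proof -
      have gG: "g \<in> ?G" and gab: "g a = a" "g b = b" using stabG[OF g] by auto
      define k where "k = inv w \<circ> g \<circ> w"
      have kG: "k \<in> ?G" unfolding k_def
        by (rule gen_group.gen_comp[OF gen_group.gen_comp[OF gen_group.gen_inv[OF w(1)] gG] w(1)])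
      have kp: "k p = p" "k q = q" unfolding k_def using wp gab iwa by auto
      have "\<exists>n. \<forall>m. k (ipow e m (Inf I)) = ipow e (m+n) (Inf I)"
        using CL2S[unfolded CL2_def, rule_format, OF w(2) kG] kp unfolding p_def q_def by blast
      then obtain n where n: "\<forall>m. k (ipow e m x) = ipow e (m+n) x" unfolding x_def by blast
      have "g (\<sigma> m) = \<sigma> (m+n)" for m
      proof -
        have "w (k (ipow e m x)) = g (w (ipow e m x))" unfolding k_def using GOOD_inv_app[OF Gw] by simp
        thus ?thesis unfolding \<sigma>_def using n by simp
      qed
      thus ?thesis by blast
    qed
    have uniq: "n1 = n2" if "\<forall>m. g (\<sigma> m) = \<sigma> (m+n1)" "\<forall>m. g (\<sigma> m) = \<sigma> (m+n2)" for g n1 n2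
    proof -
      have "\<sigma> n1 = \<sigma> n2" using that[THEN spec[of _ 0]] by simp
      thus ?thesis using strict_mono_eq[OF sm, of n1 n2] by simp
    qed
    define \<tau> where "\<tau> g = real_of_int (THE n. \<forall>m. g (\<sigma> m) = \<sigma> (m+n))" for g
    have \<tau>I: "\<tau> g = real_of_int n" if "\<forall>m. g (\<sigma> m) = \<sigma> (m+n)" for g n
    proof -
      have "(THE n. \<forall>m. g (\<sigma> m) = \<sigma> (m+n)) = n"
      proof (rule the_equality)
        show "\<forall>m. g (\<sigma> m) = \<sigma> (m+n)" by (rule that)
        show "n' = n" if "\<forall>m. g (\<sigma> m) = \<sigma> (m+n')" for n' by (rule uniq[OF that \<open>\<forall>m. g (\<sigma> m) = \<sigma> (m+n)\<close>])
      qed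
      thus ?thesis unfolding \<tau>_def by simp
    qed
    have cof: "\<exists>k. \<sigma> k \<le> y \<and> y \<le> \<sigma> (k+1)" if y: "a < y" "y < b" for y
    proof -
      define y' where "y' = inv w y"
      have yy: "y = w y'" unfolding y'_def using GOOD_inv_app[OF Gw] by simp
      have "w p < w y'" "w y' < w q" using y wp unfolding yy by simp_all
      hence "p < y'" "y' < q" using GOOD_less[OF Gw] by blast+
      then obtain k where k: "ipow e k x \<le> y'" "y' < ipow e (k+1) x" using shp_cofinal[OF sh] by blast
      hence "\<sigma> k \<le> y" "y \<le> \<sigma> (k+1)" unfolding \<sigma>_def yy using GOOD_le[OF Gw] by auto
      thus ?thesis by blast
    qed
    have s0: "a < \<sigma> 0" "\<sigma> 0 < b"
    proof -
      have "p < x" "x < q" using shp_orbit_in[OF sh, of 0] by auto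
      hence "w p < w x" "w x < w q" using GOOD_less[OF Gw] by blast+
      thus "a < \<sigma> 0" "\<sigma> 0 < b" unfolding \<sigma>_def using wp by simp_all
    qed
    have nf: "(0 < n \<longrightarrow> y < g y) \<and> (n < 0 \<longrightarrow> g y < y)"
      if g: "g \<in> stab ?G a b" and n: "\<forall>m. g (\<sigma> m) = \<sigma> (m+n)" and y: "a < y" "y < b" for g n y
    proof -
      obtain k where k: "\<sigma> k \<le> y" "y \<le> \<sigma> (k+1)" using cof[OF y] by blast
      have sg: "strict_mono g" using stabG[OF g] unfolding GOOD_def by blast
      have "\<And>m. g (\<sigma> m) = \<sigma> (m+n)" using n by blast
      thus ?thesis using shift_nofix[OF sm sg _ k] by blast
    qed
    have rtn: "rel_translation_number ?G a b \<tau>" unfolding rel_translation_number_def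
    proof (intro conjI ballI)
      fix g h assume g: "g \<in> stab ?G a b" and h: "h \<in> stab ?G a b"
      obtain ng where ng: "\<forall>m. g (\<sigma> m) = \<sigma> (m+ng)" using hshift[OF g] by blast
      obtain nh where nh: "\<forall>m. h (\<sigma> m) = \<sigma> (m+nh)" using hshift[OF h] by blast
      have "\<forall>m. (g \<circ> h) (\<sigma> m) = \<sigma> (m + (ng + nh))" using ng nh by (simp add: ac_simps)
      hence "\<tau> (g \<circ> h) = real_of_int (ng + nh)" by (rule \<tau>I)
      thus "\<tau> (g \<circ> h) = \<tau> g + \<tau> h" using \<tau>I[OF ng] \<tau>I[OF nh] by simp
    next
      fix g assume g: "g \<in> stab ?G a b"
      obtain n where n: "\<forall>m. g (\<sigma> m) = \<sigma> (m+n)" using hshift[OF g] by blast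
      have tg: "\<tau> g = real_of_int n" by (rule \<tau>I[OF n])
      show "\<tau> g = 0 \<longleftrightarrow> (\<exists>y\<in>{a<..<b}. g y = y)"
      proof
        assume "\<tau> g = 0"
        hence "n = 0" using tg by simp
        hence "g (\<sigma> 0) = \<sigma> 0" using n by simp
        thus "\<exists>y\<in>{a<..<b}. g y = y" using s0 by auto
      next
        assume "\<exists>y\<in>{a<..<b}. g y = y"
        then obtain y where y: "a < y" "y < b" "g y = y" by auto
        have "\<not> 0 < n" "\<not> n < 0" using nf[OF g n y(1,2)] y(3) by auto
        thus "\<tau> g = 0" using tg by simp
      qed
      show "\<tau> g > 0 \<longleftrightarrow> (\<forall>y\<in>{a<..<b}. g y > y)"
      proof
        assume "\<tau> g > 0"
        hence "0 < n" using tg by simp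
        thus "\<forall>y\<in>{a<..<b}. g y > y" using nf[OF g n] by auto
      next
        assume A: "\<forall>y\<in>{a<..<b}. g y > y"
        hence "\<sigma> 0 < g (\<sigma> 0)" using s0 by auto
        hence "\<sigma> 0 < \<sigma> n" using n by simp
        hence "0 < n" using strict_mono_less[OF sm] by blast
        thus "\<tau> g > 0" using tg by simp
      qed
    qed
    have img: "\<tau> ` stab ?G a b = {1 * of_int k | k. True}"
    proof
      show "\<tau> ` stab ?G a b \<subseteq> {1 * of_int k | k. True}"
      proof
        fix t assume "t \<in> \<tau> ` stab ?G a b"
        then obtain g where g: "g \<in> stab ?G a b" "t = \<tau> g" by blast
        obtain n where n: "\<forall>m. g (\<sigma> m) = \<sigma> (m+n)" using hshift[OF g(1)] by blast
        show "t \<in> {1 * of_int k | k. True}" using \<tau>I[OF n] g(2) by simp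
      qed
      show "{1 * of_int k | k. True} \<subseteq> \<tau> ` stab ?G a b"
      proof
        fix t :: real assume "t \<in> {1 * of_int k | k. True}"
        then obtain k where t: "t = of_int k" by auto
        define c where "c = w \<circ> ipow e k \<circ> inv w"
        have "e \<in> fst ` \<S>" using w(2) by force
        hence eG: "e \<in> ?G" by (rule gen_group.gen_base)
        have cG: "c \<in> ?G" unfolding c_def
          by (rule gen_group.gen_comp[OF gen_group.gen_comp[OF w(1) gen_group_ipow[OF eG]] gen_group.gen_inv[OF w(1)]])
        have Gc: "GOOD (UU \<S>) c" using GG_GOOD[OF F cG] .
        have Gek: "GOOD {p<..<q} (ipow e k)" using GOOD_ipow[OF shp_GOOD[OF sh]] .
        have ekp: "ipow e k p = p" "ipow e k q = q" using Gek unfolding GOOD_def by auto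
        have ca: "c a = a" "c b = b" unfolding c_def using iwa ekp wp by auto
        have cst: "c \<in> stab ?G a b" unfolding stab_def using cG stab_mk[OF Gc ca] by blast
        have "\<forall>m. c (\<sigma> m) = \<sigma> (m+k)"
        proof
          fix m
          have "c (\<sigma> m) = w (ipow e k (ipow e m x))" unfolding c_def \<sigma>_def using GOOD_inv_app2[OF Gw] by simp
          also have "\<dots> = w (ipow e (k+m) x)" using ipow_add_app[OF be] by simp
          finally show "c (\<sigma> m) = \<sigma> (m+k)" unfolding \<sigma>_def by (simp add: ac_simps)
        qed
        hence "\<tau> c = t" using \<tau>I t by simp
        thus "t \<in> \<tau> ` stab ?G a b" using cst by blast
      qed
    qed
    show "\<exists>\<tau>. rel_translation_number ?G a b \<tau> \<and> (\<exists>\<alpha>::real. \<tau> ` stab ?G a b = {\<alpha> * of_int k | k. True})"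
      using rtn img by blast
  qed
  show ?thesis using wl tr by blast
qed

end
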